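(* Let $\theta\mapsto P_\theta$ ($\theta$ in an open subset of $\mathbb{R}^p$) be a family of regular $X\times X$ transition matrices, continuously differentiable in $\theta$, with $(P_\theta)_{ij}=0$ implying $\nabla_\theta(P_\theta)_{ij}=0$, and with stationary distribution $\pi_\theta$. Fix $c\in\mathbb{R}^X$ and an initial distribution $\pi_0$ independent of $\theta$. Simulate $x_0\sim\pi_0$ and $x_1,\dots,x_N$ with transition matrix $P_\theta$, set $S_0=0$, $S_k=S_{k-1}+\nabla_\theta (P_\theta)_{x_{k-1}x_k}/(P_\theta)_{x_{k-1}x_k}$ for $k=1,\dots,N$, and define the score function estimator $\widehat{\nabla_\theta C}_N=\frac1N\sum_{k=1}^N c(x_k)S_k$. Then there exist constants $K_1,K_2$ independent of $N$ such that for all $N\ge1$: (a) $\bigl\|\mathbb{E}\{\widehat{\nabla_\theta C}_N\}-\nabla_\theta(c'\pi_\theta)\bigr\|\le K_1/N$ (bias $O(1/N)$); (b) the variance (trace of the covariance matrix) of $\widehat{\nabla_\theta C}_N$ is at most $K_2N$ (variance $O(N)$).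
   Context: A transition matrix is regular if some power has all entries strictly positive; $\pi_\theta$ is its unique stationary distribution. Gradients with respect to $\theta$ are taken entrywise. *)

theory Defs
  imports "HOL-Analysis.Analysis"
begin

text \<open>Finite state space X is a finite type 'x; theta ranges over real^'p.
  Transition matrices are real^'x^'x with (P $ i $ j) = probability of i to j.\<close>

fun mat_pow :: "real^'x^'x \<Rightarrow> nat \<Rightarrow> real^'x^'x" where
  "mat_pow A 0 = mat 1"
| "mat_pow A (Suc n) = A ** mat_pow A n"

definition transition_matrix :: "real^'x::finite^'x \<Rightarrow> bool" where
  "transition_matrix P \<longleftrightarrow> (\<forall>i j. P $ i $ j \<ge> 0) \<and> (\<forall>i. (\<Sum>j\<in>UNIV. P $ i $ j) = 1)"

definition regular :: "real^'x::finite^'x \<Rightarrow> bool" where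
  "regular P \<longleftrightarrow> (\<exists>n. \<forall>i j. mat_pow P n $ i $ j > 0)"

definition prob_dist :: "('x::finite \<Rightarrow> real) \<Rightarrow> bool" where
  "prob_dist \<mu> \<longleftrightarrow> (\<forall>x. \<mu> x \<ge> 0) \<and> (\<Sum>x\<in>UNIV. \<mu> x) = 1"

definition is_stationary :: "real^'x::finite^'x \<Rightarrow> ('x \<Rightarrow> real) \<Rightarrow> bool" where
  "is_stationary P \<pi> \<longleftrightarrow> prob_dist \<pi> \<and> (\<forall>j. (\<Sum>i\<in>UNIV. \<pi> i * P $ i $ j) = \<pi> j)"

text \<open>The (unique, for regular P) stationary distribution.\<close>
definition stat_dist :: "real^'x::finite^'x \<Rightarrow> ('x \<Rightarrow> real)" where
  "stat_dist P = (THE \<pi>. is_stationary P \<pi>)"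

definition grad :: "(real^'p \<Rightarrow> real) \<Rightarrow> real^'p \<Rightarrow> real^'p" where
  "grad f \<theta> = (\<chi> k. frechet_derivative f (at \<theta>) (axis k 1))"

definition C1_on :: "(real^'p \<Rightarrow> real) \<Rightarrow> (real^'p) set \<Rightarrow> bool" where
  "C1_on f U \<longleftrightarrow> (\<exists>g. (\<forall>\<theta>\<in>U. (f has_derivative (\<lambda>h. g \<theta> \<bullet> h)) (at \<theta>)) \<and> continuous_on U g)"

definition paths :: "nat \<Rightarrow> 'x list set" where
  "paths N = {xs. length xs = Suc N}"

definition path_prob :: "('x \<Rightarrow> real) \<Rightarrow> real^'x^'x \<Rightarrow> nat \<Rightarrow> 'x list \<Rightarrow> real" where
  "path_prob \<pi>0 P N xs = \<pi>0 (xs ! 0) * (\<Prod>k\<in>{1..N}. P $ (xs ! (k - 1)) $ (xs ! k))"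

definition path_expect :: "('x \<Rightarrow> real) \<Rightarrow> real^'x^'x \<Rightarrow> nat \<Rightarrow> ('x list \<Rightarrow> 'b::real_vector) \<Rightarrow> 'b" where
  "path_expect \<pi>0 P N F = (\<Sum>xs\<in>paths N. path_prob \<pi>0 P N xs *\<^sub>R F xs)"

definition score :: "(real^'p \<Rightarrow> real^'x^'x) \<Rightarrow> real^'p \<Rightarrow> 'x list \<Rightarrow> nat \<Rightarrow> real^'p" where
  "score P \<theta> xs k = (\<Sum>m\<in>{1..k}.
      (1 / P \<theta> $ (xs ! (m - 1)) $ (xs ! m)) *\<^sub>R grad (\<lambda>t. P t $ (xs ! (m - 1)) $ (xs ! m)) \<theta>)"

definition sf_estimator :: "(real^'p \<Rightarrow> real^'x^'x) \<Rightarrow> real^'p \<Rightarrow> ('x \<Rightarrow> real) \<Rightarrow> nat \<Rightarrow> 'x list \<Rightarrow> real^'p" where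
  "sf_estimator P \<theta> c N xs = (1 / real N) *\<^sub>R (\<Sum>k\<in>{1..N}. c (xs ! k) *\<^sub>R score P \<theta> xs k)"

text \<open>Trace of the covariance matrix = E ||Z - E Z||^2.\<close>
definition trace_cov :: "('x \<Rightarrow> real) \<Rightarrow> real^'x^'x \<Rightarrow> nat \<Rightarrow> ('x list \<Rightarrow> real^'p) \<Rightarrow> real" where
  "trace_cov \<pi>0 P N Z = path_expect \<pi>0 P N (\<lambda>xs. (norm (Z xs - path_expect \<pi>0 P N Z))\<^sup>2)"

end

theory Submission
  imports Defs
begin

definition act :: "real^'x::finite^'x \<Rightarrow> ('x \<Rightarrow> real) \<Rightarrow> 'x \<Rightarrow> real" where
  "act A f i = (\<Sum>j\<in>UNIV. A$i$j * f j)"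

lemma act_mult: "act (A ** B) f = act A (act B f)"
  unfolding act_def matrix_matrix_mult_def
  by (auto simp: sum_distrib_left sum_distrib_right mult.assoc intro!: ext sum.swap)

lemma act_add: "act A (\<lambda>j. f j + g j) i = act A f i + act A g i"
  by (simp add: act_def distrib_left sum.distrib)

lemma act_scale: "act A (\<lambda>j. a * f j) i = a * act A f i"
  by (simp add: act_def sum_distrib_left algebra_simps)

lemma act_const: "transition_matrix A \<Longrightarrow> act A (\<lambda>j. a) i = a"
  by (simp add: act_def transition_matrix_def flip: sum_distrib_right)

lemma mat_pow_Suc': "mat_pow A (Suc n) = mat_pow A n ** A"
  by (induction n) (simp_all add: matrix_mul_lid matrix_mul_rid matrix_mul_assoc)

lemma mat_pow_add: "mat_pow A (m + n) = mat_pow A m ** mat_pow A n"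
  by (induction m) (simp_all add: matrix_mul_lid matrix_mul_assoc)

lemma transition_mult:
  assumes "transition_matrix A" "transition_matrix B"
  shows "transition_matrix (A ** B)"
proof -
  have "(\<Sum>j\<in>UNIV. (A ** B) $ i $ j) = 1" for i
  proof -
    have "(\<Sum>j\<in>UNIV. (A ** B) $ i $ j) = (\<Sum>k\<in>UNIV. A$i$k * (\<Sum>j\<in>UNIV. B$k$j))"
      unfolding matrix_matrix_mult_def vec_lambda_beta sum_distrib_left by (rule sum.swap)
    also have "\<dots> = 1" using assms by (simp add: transition_matrix_def)
    finally show ?thesis .
  qed
  moreover have "(A ** B)$i$j \<ge> 0" for i j
    using assms unfolding transition_matrix_def matrix_matrix_mult_def
    by (auto intro!: sum_nonneg)
  ultimately show ?thesis unfolding transition_matrix_def by auto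
qed

lemma transition_mat1: "transition_matrix (mat 1 :: real^'x::finite^'x)"
  unfolding transition_matrix_def mat_def by (auto simp: if_distrib cong: if_cong)

lemma transition_pow: "transition_matrix A \<Longrightarrow> transition_matrix (mat_pow A n)"
  by (induction n) (simp_all add: transition_mat1 transition_mult)

lemma act_bounds:
  assumes "transition_matrix A" "\<And>j. a \<le> f j" "\<And>j. f j \<le> b"
  shows "a \<le> act A f i" "act A f i \<le> b"
proof -
  have "act A (\<lambda>j. a) i \<le> act A f i" "act A f i \<le> act A (\<lambda>j. b) i"
    using assms unfolding act_def transition_matrix_def
    by (auto intro!: sum_mono mult_left_mono)
  then show "a \<le> act A f i" "act A f i \<le> b" using act_const[OF assms(1)] by auto
qed

lemma contraction:
  fixes A :: "real^'x::finite^'x"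
  assumes A: "transition_matrix A" and eps: "\<And>i j. A$i$j \<ge> \<epsilon>" "\<epsilon> > 0"
    and f: "\<And>j. a \<le> f j" "\<And>j. f j \<le> b"
  defines "lam \<equiv> 1 - real CARD('x) * \<epsilon>"
  shows "lam * a + \<epsilon> * (\<Sum>j\<in>UNIV. f j) \<le> act A f i"
    "act A f i \<le> lam * b + \<epsilon> * (\<Sum>j\<in>UNIV. f j)"
    "a \<le> lam * a + \<epsilon> * (\<Sum>j\<in>UNIV. f j)"
    "lam * b + \<epsilon> * (\<Sum>j\<in>UNIV. f j) \<le> b"
    "0 \<le> lam" "lam < 1"
proof -
  have rs: "(\<Sum>j\<in>UNIV. A$i$j) = 1" using A by (simp add: transition_matrix_def)
  have "(\<Sum>(j::'x)\<in>UNIV. \<epsilon>) \<le> (\<Sum>j\<in>UNIV. A$i$j)" by (intro sum_mono eps(1))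
  then have "real CARD('x) * \<epsilon> \<le> 1" using rs by simp
  then show l0: "0 \<le> lam" by (simp add: lam_def)
  show "lam < 1" using eps by (simp add: lam_def)
  have split: "act A f i = (\<Sum>j\<in>UNIV. (A$i$j - \<epsilon>) * f j) + \<epsilon> * (\<Sum>j\<in>UNIV. f j)"
    unfolding act_def by (simp add: left_diff_distrib sum_subtractf sum_distrib_left)
  have ssub: "(\<Sum>j\<in>UNIV. (A$i$j - \<epsilon>)) = lam"
    using rs by (simp add: sum_subtractf lam_def)
  have nn: "\<And>j. 0 \<le> A$i$j - \<epsilon>" using eps(1) by simp
  have "(\<Sum>j\<in>UNIV. (A$i$j - \<epsilon>) * a) \<le> (\<Sum>j\<in>UNIV. (A$i$j - \<epsilon>) * f j)"
    by (rule sum_mono) (rule mult_left_mono[OF f(1) nn])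
  moreover have "(\<Sum>j\<in>UNIV. (A$i$j - \<epsilon>) * a) = lam * a"
    by (simp add: ssub flip: sum_distrib_right)
  ultimately show "lam * a + \<epsilon> * (\<Sum>j\<in>UNIV. f j) \<le> act A f i" using split by linarith
  have "(\<Sum>j\<in>UNIV. (A$i$j - \<epsilon>) * f j) \<le> (\<Sum>j\<in>UNIV. (A$i$j - \<epsilon>) * b)"
    by (rule sum_mono) (rule mult_left_mono[OF f(2) nn])
  moreover have "(\<Sum>j\<in>UNIV. (A$i$j - \<epsilon>) * b) = lam * b"
    by (simp add: ssub flip: sum_distrib_right)
  ultimately show "act A f i \<le> lam * b + \<epsilon> * (\<Sum>j\<in>UNIV. f j)" using split by linarith
  have "(\<Sum>(j::'x)\<in>UNIV. a) \<le> (\<Sum>j\<in>UNIV. f j)" by (rule sum_mono) (rule f(1))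
  then have "real CARD('x) * a \<le> (\<Sum>j\<in>UNIV. f j)" by simp
  then have "\<epsilon> * (real CARD('x) * a) \<le> \<epsilon> * (\<Sum>j\<in>UNIV. f j)"
    using eps by (intro mult_left_mono) auto
  then show "a \<le> lam * a + \<epsilon> * (\<Sum>j\<in>UNIV. f j)" by (simp add: lam_def algebra_simps)
  have "(\<Sum>j\<in>UNIV. f j) \<le> (\<Sum>(j::'x)\<in>UNIV. b)" by (rule sum_mono) (rule f(2))
  then have "(\<Sum>j\<in>UNIV. f j) \<le> real CARD('x) * b" by simp
  then have "\<epsilon> * (\<Sum>j\<in>UNIV. f j) \<le> \<epsilon> * (real CARD('x) * b)"
    using eps by (intro mult_left_mono) auto
  then show "lam * b + \<epsilon> * (\<Sum>j\<in>UNIV. f j) \<le> b" by (simp add: lam_def algebra_simps)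
qed


lemma regular_pos:
  fixes Q :: "real^'x::finite^'x"
  assumes Q: "transition_matrix Q" and R: "regular Q"
  shows "\<exists>n \<epsilon>. n \<ge> 1 \<and> \<epsilon> > 0 \<and> (\<forall>i j. \<epsilon> \<le> mat_pow Q n $ i $ j)"
proof -
  obtain n0 where pos: "\<And>i j. mat_pow Q n0 $ i $ j > 0" using R unfolding regular_def by blast
  define B where "B = mat_pow Q (Suc n0)"
  have Bpos: "B $ i $ j > 0" for i j
  proof -
    have "(\<Sum>k\<in>UNIV. Q$i$k) = 1" using Q by (simp add: transition_matrix_def)
    then obtain k where k: "Q$i$k \<noteq> 0" by (metis (mono_tags, lifting) sum.neutral zero_neq_one)
    then have kp: "Q$i$k > 0" using Q unfolding transition_matrix_def by (metis order_le_less)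
    have "0 < Q$i$k * mat_pow Q n0 $ k $ j" using kp pos by simp
    also have "\<dots> \<le> (\<Sum>k\<in>UNIV. Q$i$k * mat_pow Q n0 $ k $ j)"
      by (rule member_le_sum[where f="\<lambda>k. Q$i$k * mat_pow Q n0 $ k $ j"])
        (use Q pos in \<open>auto simp: transition_matrix_def less_imp_le\<close>)
    also have "\<dots> = B $ i $ j" by (simp add: B_def matrix_matrix_mult_def)
    finally show ?thesis .
  qed
  define \<epsilon> where "\<epsilon> = Min (range (\<lambda>(i,j). B $ i $ j))"
  have fin: "finite (range (\<lambda>(i,j). B $ i $ j))" by simp
  have "\<epsilon> \<in> range (\<lambda>(i,j). B $ i $ j)" unfolding \<epsilon>_def by (rule Min_in[OF fin]) simp
  then have "\<epsilon> > 0" using Bpos by auto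
  moreover have "\<epsilon> \<le> B $ i $ j" for i j unfolding \<epsilon>_def
    by (rule Min_le[OF fin]) (auto intro: image_eqI[where x="(i,j)"])
  ultimately show ?thesis unfolding B_def by (intro exI[of _ "Suc n0"] exI[of _ \<epsilon>]) auto
qed

lemma ex2I: "P a b \<Longrightarrow> \<exists>x y. P x y" by blast

definition contracts :: "real^'x::finite^'x \<Rightarrow> real \<Rightarrow> real \<Rightarrow> bool" where
  "contracts Q C \<rho> \<longleftrightarrow> C > 0 \<and> 0 < \<rho> \<and> \<rho> < 1 \<and>
     (\<forall>m f a b. (\<forall>j. a \<le> f j \<and> f j \<le> b) \<longrightarrow> (\<exists>a' b'. a \<le> a' \<and> b' \<le> b \<and>
        (\<forall>j. a' \<le> act (mat_pow Q m) f j \<and> act (mat_pow Q m) f j \<le> b') \<and>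
        b' - a' \<le> C * \<rho>^m * (b - a)))"

lemma ergodic:
  fixes Q :: "real^'x::finite^'x"
  assumes Q: "transition_matrix Q" and R: "regular Q"
  shows "\<exists>C \<rho>. contracts Q C \<rho>"
proof -
  obtain n \<epsilon> where n: "n \<ge> 1" and e: "\<epsilon> > 0" and en: "\<And>i j. \<epsilon> \<le> mat_pow Q n $ i $ j"
    using regular_pos[OF Q R] by blast
  define A where "A = mat_pow Q n"
  have A: "transition_matrix A" unfolding A_def by (rule transition_pow[OF Q])
  define lam0 where "lam0 = 1 - real CARD('x) * \<epsilon>"
  define lam where "lam = max lam0 (1/2)"
  have l0: "0 \<le> lam0" "lam0 < 1"
    using contraction(5,6)[OF A en[folded A_def] e, of 0 "\<lambda>_. 0" 0] by (simp_all add: lam0_def)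
  have lam: "0 < lam" "lam < 1" "lam0 \<le> lam" using l0 by (auto simp: lam_def)
  have main: "\<forall>f a b. (\<forall>j. a \<le> f j \<and> f j \<le> b) \<longrightarrow> (\<exists>a' b'. a \<le> a' \<and> b' \<le> b \<and>
        (\<forall>j. a' \<le> act (mat_pow Q m) f j \<and> act (mat_pow Q m) f j \<le> b') \<and>
        b' - a' \<le> lam ^ (m div n) * (b - a))" for m
  proof (induction m rule: less_induct)
    case (less m)
    show ?case
    proof (intro allI impI)
      fix f :: "'x \<Rightarrow> real" and a b
      assume fb: "\<forall>j. a \<le> f j \<and> f j \<le> b"
      show "\<exists>a' b'. a \<le> a' \<and> b' \<le> b \<and>
        (\<forall>j. a' \<le> act (mat_pow Q m) f j \<and> act (mat_pow Q m) f j \<le> b') \<and>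
        b' - a' \<le> lam ^ (m div n) * (b - a)"
      proof (cases "m < n")
        case True
        then have md: "m div n = 0" by simp
        have "\<forall>j. a \<le> act (mat_pow Q m) f j \<and> act (mat_pow Q m) f j \<le> b"
          using fb act_bounds[OF transition_pow[OF Q]] by meson
        then show ?thesis using md by (intro ex2I[where a=a and b=b]) simp
      next
        case False
        define s where "s = (\<Sum>j\<in>UNIV. f j)"
        define a1 where "a1 = lam0 * a + \<epsilon> * s"
        define b1 where "b1 = lam0 * b + \<epsilon> * s"
        note C = contraction[OF A en[folded A_def] e, of a f b, folded lam0_def s_def a1_def b1_def]
        have g: "\<forall>j. a1 \<le> act A f j \<and> act A f j \<le> b1" using C fb by (auto simp: a1_def b1_def)
        have ab: "a \<le> a1" "b1 \<le> b" using C fb by (auto simp: a1_def b1_def)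
        have "m - n < m" using n False by simp
        from less[OF this, rule_format, of a1 "act A f" b1] g obtain a' b' where
          ab': "a1 \<le> a'" "b' \<le> b1"
            "\<forall>j. a' \<le> act (mat_pow Q (m - n)) (act A f) j \<and> act (mat_pow Q (m - n)) (act A f) j \<le> b'"
            "b' - a' \<le> lam ^ ((m - n) div n) * (b1 - a1)" by blast
        have eqm: "act (mat_pow Q m) f = act (mat_pow Q (m - n)) (act A f)"
          using False by (metis A_def act_mult le_add_diff_inverse2 mat_pow_add not_less)
        have dv: "m div n = Suc ((m - n) div n)" using False n by (simp add: le_div_geq)
        have "b - a \<ge> 0" using fb[rule_format, of undefined] by linarith
        have "b1 - a1 = lam0 * (b - a)" by (simp add: a1_def b1_def algebra_simps)
        also have "\<dots> \<le> lam * (b - a)" using lam \<open>b - a \<ge> 0\<close> by (intro mult_right_mono) auto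
        finally have "lam ^ ((m - n) div n) * (b1 - a1) \<le> lam ^ ((m - n) div n) * (lam * (b - a))"
          using lam by (intro mult_left_mono) auto
        also have "\<dots> = lam ^ (m div n) * (b - a)" by (simp add: dv)
        finally show ?thesis using ab ab' eqm by (intro ex2I[where a=a' and b=b']) simp
      qed
    qed
  qed
  define \<rho> where "\<rho> = root n lam"
  have n0: "0 < n" using n by simp
  have rho: "0 < \<rho>" "\<rho> < 1" "\<rho> ^ n = lam"
    using lam n0 by (auto simp: \<rho>_def real_root_lt_1_iff real_root_pow_pos)
  have pw: "lam ^ (m div n) \<le> (1/lam) * \<rho> ^ m" for m
  proof -
    have "lam ^ (m div n) * lam = \<rho> ^ (n * (m div n) + n)"
      by (simp add: power_add power_mult rho(3))
    also have "\<dots> \<le> \<rho> ^ m"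
    proof (rule power_decreasing)
      have "m < n * (m div n) + n" using n0
        by (metis add.commute div_mult_mod_eq mod_less_divisor nat_add_left_cancel_less mult.commute)
      then show "m \<le> n * (m div n) + n" by simp
    qed (use rho in auto)
    finally show ?thesis using lam by (simp add: field_simps)
  qed
  have "contracts Q (1/lam) \<rho>"
    unfolding contracts_def
  proof (intro conjI allI impI)
    fix m f a b
    assume fb: "\<forall>j. a \<le> (f::'x\<Rightarrow>real) j \<and> f j \<le> b"
    then have "b - a \<ge> 0" using fb[rule_format, of undefined] by linarith
    obtain a' b' where ab: "a \<le> a'" "b' \<le> b"
      "\<forall>j. a' \<le> act (mat_pow Q m) f j \<and> act (mat_pow Q m) f j \<le> b'"
      "b' - a' \<le> lam ^ (m div n) * (b - a)" using main[of m] fb by blast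
    have "lam ^ (m div n) * (b - a) \<le> (1/lam) * \<rho> ^ m * (b - a)"
      using pw[of m] \<open>b - a \<ge> 0\<close> by (intro mult_right_mono) auto
    then show "\<exists>a' b'. a \<le> a' \<and> b' \<le> b \<and>
        (\<forall>j. a' \<le> act (mat_pow Q m) f j \<and> act (mat_pow Q m) f j \<le> b') \<and>
        b' - a' \<le> 1 / lam * \<rho> ^ m * (b - a)" using ab by (intro ex2I[where a=a' and b=b']) simp
  qed (use lam rho in auto)
  then show ?thesis by blast
qed


lemma contracts_D:
  assumes "contracts Q C \<rho>" "\<forall>j. a \<le> f j \<and> f j \<le> b"
  shows "\<exists>a' b'. a \<le> a' \<and> b' \<le> b \<and>
        (\<forall>j. a' \<le> act (mat_pow Q m) f j \<and> act (mat_pow Q m) f j \<le> b') \<and>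
        b' - a' \<le> C * \<rho>^m * (b - a)"
  using assms unfolding contracts_def by blast

lemma stat_iter:
  fixes Q :: "real^'x::finite^'x"
  assumes st: "\<And>j. (\<Sum>i\<in>UNIV. \<mu> i * Q$i$j) = \<mu> j"
  shows "(\<Sum>i\<in>UNIV. \<mu> i * mat_pow Q m $ i $ j) = \<mu> j"
proof (induction m arbitrary: j)
  case 0
  then show ?case by (simp add: mat_def if_distrib cong: if_cong)
next
  case (Suc m)
  have "(\<Sum>i\<in>UNIV. \<mu> i * mat_pow Q (Suc m) $ i $ j)
      = (\<Sum>i\<in>UNIV. \<Sum>k\<in>UNIV. \<mu> i * (mat_pow Q m $ i $ k * Q $ k $ j))"
    unfolding mat_pow_Suc' matrix_matrix_mult_def vec_lambda_beta sum_distrib_left ..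
  also have "\<dots> = (\<Sum>k\<in>UNIV. (\<Sum>i\<in>UNIV. \<mu> i * mat_pow Q m $ i $ k) * Q $ k $ j)"
    by (subst sum.swap) (simp add: sum_distrib_right mult.assoc)
  also have "\<dots> = \<mu> j" using Suc st by simp
  finally show ?case .
qed

lemma stat_act:
  fixes Q :: "real^'x::finite^'x"
  assumes st: "\<And>j. (\<Sum>i\<in>UNIV. \<mu> i * Q$i$j) = \<mu> j"
  shows "(\<Sum>i\<in>UNIV. \<mu> i * act (mat_pow Q m) f i) = (\<Sum>j\<in>UNIV. \<mu> j * f j)"
proof -
  have "(\<Sum>i\<in>UNIV. \<mu> i * act (mat_pow Q m) f i)
      = (\<Sum>j\<in>UNIV. (\<Sum>i\<in>UNIV. \<mu> i * mat_pow Q m $ i $ j) * f j)"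
    unfolding act_def sum_distrib_left sum_distrib_right
    by (subst sum.swap) (simp add: mult.assoc)
  then show ?thesis using stat_iter[OF st] by simp
qed

lemma le_geom_zero:
  fixes x C \<rho> :: real
  assumes "0 < \<rho>" "\<rho> < 1" "\<And>m. x \<le> C * \<rho> ^ m"
  shows "x \<le> 0"
proof -
  have "(\<lambda>m. C * \<rho> ^ m) \<longlonglongrightarrow> C * 0"
    by (intro tendsto_mult tendsto_const LIMSEQ_power_zero) (use assms in auto)
  then show ?thesis using assms(3) by (intro LIMSEQ_le_const[of "\<lambda>m. C * \<rho> ^ m"]) auto
qed

lemma indicator_bounds: "\<forall>j. (0::real) \<le> (if j = j0 then 1 else 0) \<and> (if j = j0 then 1 else 0) \<le> (1::real)"
  by auto

lemma act_indicator: "act A (\<lambda>j. if j = j0 then 1 else 0) i = A $ i $ j0"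
  by (simp add: act_def if_distrib cong: if_cong)

lemma signed_expansion:
  fixes \<mu> v :: "'x::finite \<Rightarrow> real"
  assumes "\<forall>i. a' \<le> v i \<and> v i \<le> b'"
  shows "\<bar>(\<Sum>i\<in>UNIV. \<mu> i * v i) - a' * (\<Sum>i\<in>UNIV. \<mu> i)\<bar> \<le> (\<Sum>i\<in>UNIV. \<bar>\<mu> i\<bar>) * (b' - a')"
proof -
  have "\<bar>(\<Sum>i\<in>UNIV. \<mu> i * v i) - a' * (\<Sum>i\<in>UNIV. \<mu> i)\<bar> = \<bar>\<Sum>i\<in>UNIV. \<mu> i * (v i - a')\<bar>"
    by (simp add: sum_distrib_left algebra_simps sum_subtractf)
  also have "\<dots> \<le> (\<Sum>i\<in>UNIV. \<bar>\<mu> i * (v i - a')\<bar>)" by (rule sum_abs)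
  also have "\<dots> \<le> (\<Sum>i\<in>UNIV. \<bar>\<mu> i\<bar> * (b' - a'))"
    by (rule sum_mono) (use assms in \<open>auto simp: abs_mult intro!: mult_left_mono\<close>)
  finally show ?thesis by (simp add: sum_distrib_right)
qed

lemma signed_zero:
  fixes Q :: "real^'x::finite^'x"
  assumes c: "contracts Q C \<rho>"
    and st: "\<And>j. (\<Sum>i\<in>UNIV. \<mu> i * Q$i$j) = \<mu> j" and s0: "(\<Sum>i\<in>UNIV. \<mu> i) = 0"
  shows "\<mu> j0 = 0"
proof -
  have cr: "C > 0" "0 < \<rho>" "\<rho> < 1" using c by (auto simp: contracts_def)
  have "\<bar>\<mu> j0\<bar> \<le> ((\<Sum>i\<in>UNIV. \<bar>\<mu> i\<bar>) * C) * \<rho> ^ m" for m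
  proof -
    obtain a' b' where ab: "\<forall>i. a' \<le> act (mat_pow Q m) (\<lambda>j. if j = j0 then 1 else 0) i \<and>
        act (mat_pow Q m) (\<lambda>j. if j = j0 then 1 else 0) i \<le> b'" "b' - a' \<le> C * \<rho>^m * (1 - 0)"
      using contracts_D[OF c indicator_bounds[of j0], of m] by blast
    have "\<mu> j0 = (\<Sum>i\<in>UNIV. \<mu> i * act (mat_pow Q m) (\<lambda>j. if j = j0 then 1 else 0) i)"
      by (simp add: stat_act[OF st] if_distrib cong: if_cong)
    then have "\<bar>\<mu> j0\<bar> \<le> (\<Sum>i\<in>UNIV. \<bar>\<mu> i\<bar>) * (b' - a')"
      using signed_expansion[OF ab(1), of \<mu>] s0 by simp
    also have "\<dots> \<le> (\<Sum>i\<in>UNIV. \<bar>\<mu> i\<bar>) * (C * \<rho>^m)"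
      using ab(2) by (intro mult_left_mono) (auto intro: sum_nonneg)
    finally show ?thesis by (simp add: mult.assoc)
  qed
  then have "\<bar>\<mu> j0\<bar> \<le> 0" using cr by (intro le_geom_zero[of \<rho>]) auto
  then show ?thesis by simp
qed

lemma stat_nonneg:
  fixes Q :: "real^'x::finite^'x"
  assumes c: "contracts Q C \<rho>"
    and st: "\<And>j. (\<Sum>i\<in>UNIV. \<mu> i * Q$i$j) = \<mu> j" and s1: "(\<Sum>i\<in>UNIV. \<mu> i) = 1"
  shows "\<mu> j0 \<ge> 0"
proof -
  have cr: "C > 0" "0 < \<rho>" "\<rho> < 1" using c by (auto simp: contracts_def)
  have "- \<mu> j0 \<le> ((\<Sum>i\<in>UNIV. \<bar>\<mu> i\<bar>) * C) * \<rho> ^ m" for m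
  proof -
    obtain a' b' where ab: "0 \<le> a'" "\<forall>i. a' \<le> act (mat_pow Q m) (\<lambda>j. if j = j0 then 1 else 0) i \<and>
        act (mat_pow Q m) (\<lambda>j. if j = j0 then 1 else 0) i \<le> b'" "b' - a' \<le> C * \<rho>^m * (1 - 0)"
      using contracts_D[OF c indicator_bounds[of j0], of m] by blast
    have "\<mu> j0 = (\<Sum>i\<in>UNIV. \<mu> i * act (mat_pow Q m) (\<lambda>j. if j = j0 then 1 else 0) i)"
      by (simp add: stat_act[OF st] if_distrib cong: if_cong)
    then have "a' - \<mu> j0 \<le> (\<Sum>i\<in>UNIV. \<bar>\<mu> i\<bar>) * (b' - a')"
      using signed_expansion[OF ab(2), of \<mu>] s1 by simp
    also have "\<dots> \<le> (\<Sum>i\<in>UNIV. \<bar>\<mu> i\<bar>) * (C * \<rho>^m)"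
      using ab(3) by (intro mult_left_mono) (auto intro: sum_nonneg)
    finally show ?thesis using ab(1) by (simp add: mult.assoc)
  qed
  then have "- \<mu> j0 \<le> 0" using cr by (intro le_geom_zero[of \<rho>]) auto
  then show ?thesis by simp
qed

lemma stat_dev:
  fixes Q :: "real^'x::finite^'x"
  assumes c: "contracts Q C \<rho>" and pd: "prob_dist \<mu>"
    and st: "\<And>j. (\<Sum>i\<in>UNIV. \<mu> i * Q$i$j) = \<mu> j"
    and fb: "\<forall>j. a \<le> f j \<and> f j \<le> b"
  shows "\<bar>act (mat_pow Q m) f i - (\<Sum>j\<in>UNIV. \<mu> j * f j)\<bar> \<le> C * \<rho>^m * (b - a)"
proof -
  obtain a' b' where ab: "\<forall>i. a' \<le> act (mat_pow Q m) f i \<and> act (mat_pow Q m) f i \<le> b'"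
      "b' - a' \<le> C * \<rho>^m * (b - a)"
    using contracts_D[OF c fb, of m] by blast
  have s1: "(\<Sum>i\<in>UNIV. \<mu> i) = 1" and nn: "\<And>i. \<mu> i \<ge> 0" using pd by (auto simp: prob_dist_def)
  have m: "(\<Sum>j\<in>UNIV. \<mu> j * f j) = (\<Sum>i\<in>UNIV. \<mu> i * act (mat_pow Q m) f i)"
    using stat_act[OF st] by simp
  have "(\<Sum>i\<in>UNIV. \<mu> i * a') \<le> (\<Sum>i\<in>UNIV. \<mu> i * act (mat_pow Q m) f i)"
    by (rule sum_mono) (use ab nn in \<open>auto intro: mult_left_mono\<close>)
  moreover have "(\<Sum>i\<in>UNIV. \<mu> i * act (mat_pow Q m) f i) \<le> (\<Sum>i\<in>UNIV. \<mu> i * b')"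
    by (rule sum_mono) (use ab nn in \<open>auto intro: mult_left_mono\<close>)
  ultimately have "a' \<le> (\<Sum>j\<in>UNIV. \<mu> j * f j)" "(\<Sum>j\<in>UNIV. \<mu> j * f j) \<le> b'"
    using s1 m by (simp_all add: sum_distrib_right[symmetric])
  then show ?thesis using ab by (smt (verit))
qed

definition Mz :: "real^'x::finite^'x \<Rightarrow> real^'x^'x" where
  "Mz Q = (\<chi> j i. (if i = j then 1 else 0) - Q$i$j + 1)"

lemma Mz_mult: "(Mz Q *v v) $ j = v $ j - (\<Sum>i\<in>UNIV. Q$i$j * v$i) + (\<Sum>i\<in>UNIV. v$i)"
proof -
  have "(Mz Q *v v) $ j = (\<Sum>i\<in>UNIV. ((if i = j then v$i else 0) - Q$i$j * v$i) + v$i)"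
    unfolding Mz_def matrix_vector_mult_def vec_lambda_beta
    by (rule sum.cong) (auto simp: algebra_simps)
  also have "\<dots> = (\<Sum>i\<in>UNIV. (if i = j then v$i else 0)) - (\<Sum>i\<in>UNIV. Q$i$j * v$i) + (\<Sum>i\<in>UNIV. v$i)"
    by (simp only: sum.distrib sum_subtractf)
  finally show ?thesis by simp
qed

lemma Mz_sum:
  fixes Q :: "real^'x::finite^'x"
  assumes "transition_matrix Q"
  shows "(\<Sum>j\<in>UNIV. (Mz Q *v v) $ j) = real CARD('x) * (\<Sum>i\<in>UNIV. v$i)"
proof -
  have "(\<Sum>j\<in>UNIV. \<Sum>i\<in>UNIV. Q$i$j * v$i) = (\<Sum>i\<in>UNIV. (\<Sum>j\<in>UNIV. Q$i$j) * v$i)"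
    by (subst sum.swap) (simp add: sum_distrib_right)
  also have "\<dots> = (\<Sum>i\<in>UNIV. v$i)" using assms by (simp add: transition_matrix_def)
  finally show ?thesis unfolding Mz_mult by (simp add: sum.distrib sum_subtractf)
qed

lemma Mz_inj:
  fixes Q :: "real^'x::finite^'x"
  assumes Q: "transition_matrix Q" and c: "contracts Q C \<rho>" and z: "Mz Q *v v = 0"
  shows "v = 0"
proof -
  have "real CARD('x) * (\<Sum>i\<in>UNIV. v$i) = 0" using Mz_sum[OF Q, of v] z by simp
  then have s0: "(\<Sum>i\<in>UNIV. v$i) = 0" by simp
  have st: "(\<Sum>i\<in>UNIV. v$i * Q$i$j) = v$j" for j
    using arg_cong[OF z, of "\<lambda>w. w $ j"] s0 unfolding Mz_mult by (simp add: mult.commute)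
  show ?thesis using signed_zero[OF c, of "\<lambda>i. v$i"] st s0 by (simp add: vec_eq_iff)
qed

lemma Mz_det:
  fixes Q :: "real^'x::finite^'x"
  assumes Q: "transition_matrix Q" and c: "contracts Q C \<rho>"
  shows "det (Mz Q) \<noteq> 0"
proof -
  have "inj ((*v) (Mz Q))" using Mz_inj[OF Q c] by (simp add: vec.inj_iff_eq_0)
  then show ?thesis using det_nz_iff_inj[of "(*v) (Mz Q)"]
    by (simp add: matrix_of_matrix_vector_mul matrix_vector_mul_linear)
qed

lemma stationary_Mz:
  assumes Q: "transition_matrix Q" and st: "is_stationary Q \<pi>"
  shows "Mz Q *v (\<chi> i. \<pi> i) = (\<chi> i. 1)"
  using st unfolding vec_eq_iff Mz_mult is_stationary_def prob_dist_def by (simp add: mult.commute)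

lemma stationary_unique:
  fixes Q :: "real^'x::finite^'x"
  assumes Q: "transition_matrix Q" and c: "contracts Q C \<rho>"
    and s1: "is_stationary Q \<pi>" and s2: "is_stationary Q \<pi>'"
  shows "\<pi> = \<pi>'"
proof -
  have "\<pi> j - \<pi>' j = 0" for j
  proof (rule signed_zero[OF c, of "\<lambda>i. \<pi> i - \<pi>' i"])
    show "(\<Sum>i\<in>UNIV. (\<pi> i - \<pi>' i) * Q $ i $ j) = \<pi> j - \<pi>' j" for j
      using s1 s2 unfolding is_stationary_def by (simp add: left_diff_distrib sum_subtractf)
    show "(\<Sum>i\<in>UNIV. \<pi> i - \<pi>' i) = 0"
      using s1 s2 unfolding is_stationary_def prob_dist_def by (simp add: sum_subtractf)
  qed
  then show ?thesis by auto
qed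

lemma stationary_exists:
  fixes Q :: "real^'x::finite^'x"
  assumes Q: "transition_matrix Q" and c: "contracts Q C \<rho>"
  shows "\<exists>\<pi>. is_stationary Q \<pi>"
proof -
  have "invertible (Mz Q)" using Mz_det[OF Q c] by (simp add: invertible_det_nz)
  then obtain B where B: "Mz Q ** B = mat 1" unfolding invertible_def by blast
  define v where "v = B *v (\<chi> i. 1)"
  have z: "Mz Q *v v = (\<chi> i. 1)" unfolding v_def matrix_vector_mul_assoc B by simp
  have "real CARD('x) * (\<Sum>i\<in>UNIV. v$i) = real CARD('x)" using Mz_sum[OF Q, of v] z by simp
  then have s1: "(\<Sum>i\<in>UNIV. v$i) = 1" by simp
  have st: "(\<Sum>i\<in>UNIV. v$i * Q$i$j) = v$j" for j
    using arg_cong[OF z, of "\<lambda>w. w $ j"] s1 unfolding Mz_mult by (simp add: mult.commute)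
  have "is_stationary Q (\<lambda>i. v$i)"
    unfolding is_stationary_def prob_dist_def
    using st s1 stat_nonneg[OF c, of "\<lambda>i. v$i"] by auto
  then show ?thesis by blast
qed

lemma stat_dist_props:
  fixes Q :: "real^'x::finite^'x"
  assumes Q: "transition_matrix Q" and c: "contracts Q C \<rho>"
  shows "is_stationary Q (stat_dist Q)"
    "\<And>k. stat_dist Q k = det (\<chi> i j. if j = k then 1 else Mz Q $ i $ j) / det (Mz Q)"
proof -
  obtain \<pi> where \<pi>: "is_stationary Q \<pi>" using stationary_exists[OF Q c] by blast
  have "stat_dist Q = \<pi>" unfolding stat_dist_def
    using \<pi> stationary_unique[OF Q c] by (intro the_equality) auto
  then show st: "is_stationary Q (stat_dist Q)" using \<pi> by simp
  fix k
  have e: "Mz Q *v (\<chi> i. stat_dist Q i) = (\<chi> i. 1)" by (rule stationary_Mz[OF Q st])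
  have "det (\<chi> i j. if j = k then (Mz Q *v (\<chi> i. stat_dist Q i)) $ i else Mz Q $ i $ j)
      = stat_dist Q k * det (Mz Q)" using cramer_lemma[of k "Mz Q" "(\<chi> i. stat_dist Q i)"] by simp
  then have "det (\<chi> i j. if j = k then 1 else Mz Q $ i $ j) = stat_dist Q k * det (Mz Q)"
    unfolding e by (simp only: vec_lambda_beta)
  then show "stat_dist Q k = det (\<chi> i j. if j = k then 1 else Mz Q $ i $ j) / det (Mz Q)"
    using Mz_det[OF Q c] by simp
qed


lemma grad_eq:
  fixes f :: "real^'p \<Rightarrow> real"
  assumes "(f has_derivative (\<lambda>h. v \<bullet> h)) (at t)"
  shows "grad f t = v"
proof -
  have "frechet_derivative f (at t) = (\<lambda>h. v \<bullet> h)" using frechet_derivative_at[OF assms] by simp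
  then show ?thesis unfolding grad_def by (simp add: vec_eq_iff inner_axis)
qed

lemma axis_expansion: "(h::real^'n) = (\<Sum>k\<in>UNIV. h$k *\<^sub>R axis k 1)"
  by (simp add: vec_eq_iff axis_def if_distrib sum_component cong: if_cong)

lemma grad_works:
  fixes f :: "real^'p \<Rightarrow> real"
  assumes "f differentiable (at t)"
  shows "(f has_derivative (\<lambda>h. grad f t \<bullet> h)) (at t)"
proof -
  let ?L = "frechet_derivative f (at t)"
  have lin: "linear ?L" by (rule linear_frechet_derivative[OF assms])
  have "?L h = grad f t \<bullet> h" for h
  proof -
    have "?L h = ?L (\<Sum>k\<in>UNIV. h$k *\<^sub>R axis k 1)" using axis_expansion[of h] by simp
    also have "\<dots> = (\<Sum>k\<in>UNIV. h$k * ?L (axis k 1))"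
      by (simp add: linear_sum[OF lin] linear_cmul[OF lin])
    also have "\<dots> = grad f t \<bullet> h" by (simp add: grad_def inner_vec_def mult.commute)
    finally show ?thesis .
  qed
  then have "?L = (\<lambda>h. grad f t \<bullet> h)" by auto
  then show ?thesis using frechet_derivative_works[of f "at t"] assms by simp
qed

lemma grad_zero_on_open:
  fixes f :: "real^'p \<Rightarrow> real"
  assumes "(f has_derivative (\<lambda>h. v \<bullet> h)) (at t)" "open U" "t \<in> U" "\<And>s. s \<in> U \<Longrightarrow> f s = 0"
  shows "v = 0"
proof -
  have "((\<lambda>s. 0) has_derivative (\<lambda>h. v \<bullet> h)) (at t)"
    using has_derivative_transform_within_open[OF assms(1,2,3)] assms(4) by auto
  then have "grad (\<lambda>s. 0) t = v" by (rule grad_eq)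
  moreover have "((\<lambda>s. 0::real) has_derivative (\<lambda>h. 0 \<bullet> h)) (at t)" by simp
  then have "grad (\<lambda>s. 0) t = 0" by (rule grad_eq)
  ultimately show ?thesis by simp
qed

lemma det_differentiable:
  fixes A :: "real^'p \<Rightarrow> real^'x::finite^'x"
  assumes "\<And>i j. (\<lambda>t. A t $ i $ j) differentiable (at t0)"
  shows "(\<lambda>t. det (A t)) differentiable (at t0)"
proof -
  have pr: "(\<lambda>t. \<Prod>i\<in>UNIV. A t $ i $ p i) differentiable (at t0)" for p :: "'x \<Rightarrow> 'x"
  proof -
    define D where "D i = frechet_derivative (\<lambda>t. A t $ i $ p i) (at t0)" for i
    have D: "\<And>i. ((\<lambda>t. A t $ i $ p i) has_derivative D i) (at t0)"
      unfolding D_def using assms frechet_derivative_works by blast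
    show ?thesis using has_derivative_prod[of UNIV "\<lambda>i t. A t $ i $ p i" D t0 UNIV] D
      unfolding differentiable_def by blast
  qed
  show ?thesis unfolding det_def
    by (intro differentiable_sum ballI differentiable_mult differentiable_const pr)
      (simp add: finite_permutations)
qed


lemma finite_paths: "finite (paths N :: 'x::finite list set)"
  unfolding paths_def using finite_lists_length_eq[of "UNIV :: 'x set" "Suc N"] by simp

lemma paths_Suc: "paths (Suc N) = (\<lambda>(xs, y). xs @ [y]) ` (paths N \<times> UNIV)"
proof (intro set_eqI iffI)
  fix zs assume "zs \<in> paths (Suc N)"
  then have l: "length zs = Suc (Suc N)" by (simp add: paths_def)
  then have "zs = butlast zs @ [last zs]" by (metis append_butlast_last_id list.size(3) nat.simps(3))
  moreover have "butlast zs \<in> paths N" using l by (simp add: paths_def)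
  ultimately show "zs \<in> (\<lambda>(xs, y). xs @ [y]) ` (paths N \<times> UNIV)" by (auto intro!: image_eqI[where x="(butlast zs, last zs)"])
qed (auto simp: paths_def)

lemma inj_snoc: "inj_on (\<lambda>(xs, y). xs @ [y]) A"
  by (auto simp: inj_on_def)

lemma path_prob_Suc:
  assumes "length xs = Suc N"
  shows "path_prob \<pi>0 Q (Suc N) (xs @ [y]) = path_prob \<pi>0 Q N xs * Q $ (xs ! N) $ y"
proof -
  have h0: "(xs @ [y]) ! 0 = xs ! 0" using assms by (simp add: nth_append)
  have "(\<Prod>k\<in>{1..Suc N}. Q $ ((xs @ [y]) ! (k - 1)) $ ((xs @ [y]) ! k))
      = (\<Prod>k\<in>{1..N}. Q $ ((xs @ [y]) ! (k - 1)) $ ((xs @ [y]) ! k)) * Q $ (xs ! N) $ y"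
    using assms by (simp add: prod.cl_ivl_Suc nth_append)
  also have "(\<Prod>k\<in>{1..N}. Q $ ((xs @ [y]) ! (k - 1)) $ ((xs @ [y]) ! k))
      = (\<Prod>k\<in>{1..N}. Q $ (xs ! (k - 1)) $ (xs ! k))"
    using assms by (intro prod.cong) (auto simp: nth_append)
  finally show ?thesis unfolding path_prob_def h0 by (simp add: mult.assoc)
qed

lemma expect_Suc:
  "path_expect \<pi>0 Q (Suc N) F = path_expect \<pi>0 Q N (\<lambda>xs. \<Sum>y\<in>UNIV. Q $ (xs ! N) $ y *\<^sub>R F (xs @ [y]))"
proof -
  have "path_expect \<pi>0 Q (Suc N) F =
      (\<Sum>(xs, y)\<in>paths N \<times> UNIV. path_prob \<pi>0 Q (Suc N) (xs @ [y]) *\<^sub>R F (xs @ [y]))"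
    unfolding path_expect_def paths_Suc by (subst sum.reindex[OF inj_snoc]) (simp add: case_prod_unfold)
  also have "\<dots> = (\<Sum>xs\<in>paths N. \<Sum>y\<in>UNIV. path_prob \<pi>0 Q (Suc N) (xs @ [y]) *\<^sub>R F (xs @ [y]))"
    by (subst sum.cartesian_product) simp
  also have "\<dots> = (\<Sum>xs\<in>paths N. path_prob \<pi>0 Q N xs *\<^sub>R (\<Sum>y\<in>UNIV. Q $ (xs ! N) $ y *\<^sub>R F (xs @ [y])))"
    by (intro sum.cong refl) (auto simp: paths_def path_prob_Suc scaleR_sum_right)
  finally show ?thesis unfolding path_expect_def .
qed

lemma paths_0: "paths 0 = (\<lambda>x. [x]) ` UNIV"
  by (auto simp: paths_def length_Suc_conv)

lemma expect_0: "path_expect \<pi>0 Q 0 F = (\<Sum>x\<in>UNIV. \<pi>0 x *\<^sub>R F [x])"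
  unfolding path_expect_def paths_0 by (subst sum.reindex) (auto simp: inj_on_def path_prob_def)

lemma expect_cong:
  "(\<And>xs. xs \<in> paths N \<Longrightarrow> F xs = G xs) \<Longrightarrow> path_expect \<pi>0 Q N F = path_expect \<pi>0 Q N G"
  unfolding path_expect_def by (auto intro: sum.cong)

lemma expect_add: "path_expect \<pi>0 Q N (\<lambda>xs. F xs + G xs) = path_expect \<pi>0 Q N F + path_expect \<pi>0 Q N G"
  unfolding path_expect_def by (simp add: scaleR_add_right sum.distrib)

lemma expect_diff: "path_expect \<pi>0 Q N (\<lambda>xs. F xs - G xs) = path_expect \<pi>0 Q N F - path_expect \<pi>0 Q N G"
  unfolding path_expect_def by (simp add: scaleR_diff_right sum_subtractf)

lemma expect_scale: "path_expect \<pi>0 Q N (\<lambda>xs. a *\<^sub>R F xs) = a *\<^sub>R path_expect \<pi>0 Q N F"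
  unfolding path_expect_def scaleR_sum_right scaleR_scaleR by (simp add: mult.commute)

lemma expect_mult_real: "path_expect \<pi>0 Q N (\<lambda>xs. a * (F xs :: real)) = a * path_expect \<pi>0 Q N F"
  using expect_scale[of \<pi>0 Q N a F] by simp

lemma expect_sum: "path_expect \<pi>0 Q N (\<lambda>xs. \<Sum>i\<in>I. F i xs) = (\<Sum>i\<in>I. path_expect \<pi>0 Q N (F i))"
  unfolding path_expect_def by (simp add: scaleR_sum_right sum.swap[of _ I])

lemma expect_inner_left: "path_expect \<pi>0 Q N (\<lambda>xs. v \<bullet> F xs) = v \<bullet> path_expect \<pi>0 Q N F"
  unfolding path_expect_def by (simp add: inner_sum_right)

context
  fixes \<pi>0 :: "'x::finite \<Rightarrow> real" and Q :: "real^'x^'x"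
  assumes Q: "transition_matrix Q" and p0: "prob_dist \<pi>0"
begin

lemma path_prob_nonneg: "path_prob \<pi>0 Q N xs \<ge> 0"
  using Q p0 unfolding path_prob_def transition_matrix_def prob_dist_def
  by (auto intro!: mult_nonneg_nonneg prod_nonneg)

lemma expect_one: "path_expect \<pi>0 Q N (\<lambda>xs. 1::real) = 1"
proof (induction N)
  case 0
  then show ?case using p0 by (simp add: expect_0 prob_dist_def)
next
  case (Suc N)
  have "path_expect \<pi>0 Q (Suc N) (\<lambda>xs. 1::real) = path_expect \<pi>0 Q N (\<lambda>xs. 1::real)"
    unfolding expect_Suc using Q by (intro expect_cong) (simp add: transition_matrix_def)
  then show ?case using Suc by simp
qed

lemma expect_const: "path_expect \<pi>0 Q N (\<lambda>xs. v) = v"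
proof -
  have "path_expect \<pi>0 Q N (\<lambda>xs. v) = path_expect \<pi>0 Q N (\<lambda>xs. 1::real) *\<^sub>R v"
    unfolding path_expect_def by (simp add: scaleR_sum_left)
  then show ?thesis by (simp add: expect_one)
qed

lemma expect_mono: "(\<And>xs. xs \<in> paths N \<Longrightarrow> F xs \<le> (G xs :: real)) \<Longrightarrow>
    path_expect \<pi>0 Q N F \<le> path_expect \<pi>0 Q N G"
  unfolding path_expect_def by (auto intro!: sum_mono mult_left_mono path_prob_nonneg)

lemma expect_bound: "(\<And>xs. xs \<in> paths N \<Longrightarrow> F xs \<le> (b :: real)) \<Longrightarrow> path_expect \<pi>0 Q N F \<le> b"
  using expect_mono[of N F "\<lambda>_. b"] expect_const[of N b] by simp

definition dep :: "nat \<Rightarrow> ('x list \<Rightarrow> 'b) \<Rightarrow> bool" where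
  "dep L F \<longleftrightarrow> (\<forall>xs. Suc L \<le> length xs \<longrightarrow> F xs = F (take (Suc L) xs))"

lemma dep_snoc:
  assumes d: "dep L F" and "L \<le> N" and len: "length xs = Suc N"
  shows "F (xs @ [y]) = F xs"
proof -
  have "F (xs @ [y]) = F (take (Suc L) (xs @ [y]))"
    by (rule d[unfolded dep_def, rule_format]) (use assms(2) len in simp)
  also have "take (Suc L) (xs @ [y]) = take (Suc L) xs" using assms(2) len by simp
  also have "F xs = F (take (Suc L) xs)"
    by (rule d[unfolded dep_def, rule_format]) (use assms(2) len in simp)
  then have "F (take (Suc L) xs) = F xs" by simp
  finally show ?thesis .
qed

lemma act_id: "act (mat 1) g = g"
proof
  fix i
  have "act (mat 1) g i = (\<Sum>j\<in>UNIV. if i = j then g j else 0)"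
    unfolding act_def mat_def by (rule sum.cong) auto
  then show "act (mat 1) g i = g i" by simp
qed

lemma ind_sum: "(\<Sum>i\<in>UNIV. (if x = i then 1 else 0) *\<^sub>R (\<psi> :: 'x \<Rightarrow> 'b::real_vector) i) = \<psi> x"
proof -
  have "(\<Sum>i\<in>UNIV. (if x = i then 1 else 0) *\<^sub>R \<psi> i) = (\<Sum>i\<in>UNIV. if x = i then \<psi> i else 0)"
    by (rule sum.cong) auto
  then show ?thesis by simp
qed

lemma expect_prefix:
  assumes "dep L F" "L \<le> N"
  shows "path_expect \<pi>0 Q N F = path_expect \<pi>0 Q L F"
  using assms(2)
proof (induction N rule: dec_induct)
  case (step n)
  have "path_expect \<pi>0 Q (Suc n) F = path_expect \<pi>0 Q n F"
    unfolding expect_Suc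
  proof (rule expect_cong)
    fix xs :: "'x list" assume "xs \<in> paths n"
    then have "length xs = Suc n" by (simp add: paths_def)
    then have "(\<Sum>y\<in>UNIV. Q $ (xs ! n) $ y *\<^sub>R F (xs @ [y])) = (\<Sum>y\<in>UNIV. Q $ (xs ! n) $ y) *\<^sub>R F xs"
      using dep_snoc[OF assms(1) step(1)] by (simp add: scaleR_sum_left)
    then show "(\<Sum>y\<in>UNIV. Q $ (xs ! n) $ y *\<^sub>R F (xs @ [y])) = F xs"
      using Q by (simp add: transition_matrix_def)
  qed
  then show ?case using step by simp
qed simp

lemma expect_last_aux:
  assumes "dep L F" "L \<le> N"
  shows "\<forall>g. path_expect \<pi>0 Q N (\<lambda>xs. g (xs ! N) *\<^sub>R F xs)
       = path_expect \<pi>0 Q L (\<lambda>xs. act (mat_pow Q (N - L)) g (xs ! L) *\<^sub>R F xs)"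
  using assms(2)
proof (induction N rule: dec_induct)
  case base
  show ?case by (simp add: act_id)
next
  case (step n)
  show ?case
  proof
    fix g :: "'x \<Rightarrow> real"
    have "path_expect \<pi>0 Q (Suc n) (\<lambda>xs. g (xs ! Suc n) *\<^sub>R F xs)
        = path_expect \<pi>0 Q n (\<lambda>xs. act Q g (xs ! n) *\<^sub>R F xs)"
      unfolding expect_Suc
    proof (rule expect_cong)
      fix xs :: "'x list" assume "xs \<in> paths n"
      then have l: "length xs = Suc n" by (simp add: paths_def)
      then have "(\<Sum>y\<in>UNIV. Q $ (xs ! n) $ y *\<^sub>R (g ((xs @ [y]) ! Suc n) *\<^sub>R F (xs @ [y])))
          = (\<Sum>y\<in>UNIV. (Q $ (xs ! n) $ y * g y) *\<^sub>R F xs)"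
        using dep_snoc[OF assms(1) step(1)] by (intro sum.cong refl) (simp add: nth_append)
      then show "(\<Sum>y\<in>UNIV. Q $ (xs ! n) $ y *\<^sub>R (g ((xs @ [y]) ! Suc n) *\<^sub>R F (xs @ [y])))
          = act Q g (xs ! n) *\<^sub>R F xs"
        by (simp add: act_def scaleR_sum_left)
    qed
    also have "\<dots> = path_expect \<pi>0 Q L (\<lambda>xs. act (mat_pow Q (n - L)) (act Q g) (xs ! L) *\<^sub>R F xs)"
      using step.IH by blast
    also have "act (mat_pow Q (n - L)) (act Q g) = act (mat_pow Q (Suc n - L)) g"
      using step(1) by (simp add: act_mult[symmetric] mat_pow_Suc'[symmetric] Suc_diff_le)
    finally show "path_expect \<pi>0 Q (Suc n) (\<lambda>xs. g (xs ! Suc n) *\<^sub>R F xs)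
       = path_expect \<pi>0 Q L (\<lambda>xs. act (mat_pow Q (Suc n - L)) g (xs ! L) *\<^sub>R F xs)" .
  qed
qed

lemma expect_last:
  assumes "dep L F" "L \<le> N"
  shows "path_expect \<pi>0 Q N (\<lambda>xs. g (xs ! N) *\<^sub>R F xs)
       = path_expect \<pi>0 Q L (\<lambda>xs. act (mat_pow Q (N - L)) g (xs ! L) *\<^sub>R F xs)"
  using expect_last_aux[OF assms] by blast

lemma expect_marg:
  "path_expect \<pi>0 Q L (\<lambda>xs. \<psi> (xs ! L)) = (\<Sum>i\<in>UNIV. (\<Sum>x\<in>UNIV. \<pi>0 x * mat_pow Q L $ x $ i) *\<^sub>R \<psi> i)"
proof -
  have "path_expect \<pi>0 Q L (\<lambda>xs. \<psi> (xs ! L))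
     = path_expect \<pi>0 Q L (\<lambda>xs. \<Sum>i\<in>UNIV. (\<lambda>j. if j = i then 1 else 0) (xs ! L) *\<^sub>R \<psi> i)"
    by (intro expect_cong) (simp add: ind_sum)
  also have "\<dots> = (\<Sum>i\<in>UNIV. path_expect \<pi>0 Q L (\<lambda>xs. (\<lambda>j. if j = i then 1 else 0) (xs ! L) *\<^sub>R \<psi> i))"
    by (rule expect_sum)
  also have "\<dots> = (\<Sum>i\<in>UNIV. path_expect \<pi>0 Q 0 (\<lambda>xs. act (mat_pow Q L) (\<lambda>j. if j = i then 1 else 0) (xs ! 0) *\<^sub>R \<psi> i))"
    by (intro sum.cong refl, subst expect_last[of 0 "\<lambda>_. \<psi> _"]) (auto simp: dep_def)
  also have "\<dots> = (\<Sum>i\<in>UNIV. (\<Sum>x\<in>UNIV. \<pi>0 x * mat_pow Q L $ x $ i) *\<^sub>R \<psi> i)"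
    by (simp add: expect_0 act_indicator scaleR_sum_left)
  finally show ?thesis .
qed

end


lemma norm_add_sq: "(norm (a + z :: 'v::real_inner))\<^sup>2 = (norm a)\<^sup>2 + 2 * (a \<bullet> z) + (norm z)\<^sup>2"
  by (simp add: power2_norm_eq_inner inner_add_left inner_add_right inner_commute)

context
  fixes \<pi>0 :: "'x::finite \<Rightarrow> real" and Q :: "real^'x^'x"
  assumes Q: "transition_matrix Q" and p0: "prob_dist \<pi>0"
begin

lemma expect_orth:
  fixes Y :: "nat \<Rightarrow> 'x list \<Rightarrow> 'v::real_inner"
  assumes dY: "\<And>k. dep k (Y k)"
    and mart: "\<And>n xs. length xs = Suc n \<Longrightarrow> (\<Sum>y\<in>UNIV. Q$(xs!n)$y *\<^sub>R Y (Suc n) (xs@[y])) = 0"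
    and bnd: "\<And>k xs. 1 \<le> k \<Longrightarrow> norm (Y k xs) \<le> b"
  shows "path_expect \<pi>0 Q N (\<lambda>xs. (norm (\<Sum>k\<in>{1..N}. Y k xs))\<^sup>2) \<le> real N * b\<^sup>2"
proof (induction N)
  case 0
  then show ?case by (simp add: expect_const[OF Q p0])
next
  case (Suc N)
  have pw: "(\<Sum>y\<in>UNIV. Q$(xs!N)$y *\<^sub>R (norm (\<Sum>k\<in>{1..Suc N}. Y k (xs@[y])))\<^sup>2)
      \<le> (norm (\<Sum>k\<in>{1..N}. Y k xs))\<^sup>2 + b\<^sup>2" if xs: "xs \<in> paths N" for xs
  proof -
    have len: "length xs = Suc N" using xs by (simp add: paths_def)
    define A where "A = (\<Sum>k\<in>{1..N}. Y k xs)"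
    define Z where "Z y = Y (Suc N) (xs @ [y])" for y
    have sp: "(\<Sum>k\<in>{1..Suc N}. Y k (xs@[y])) = A + Z y" for y
    proof -
      have "(\<Sum>k\<in>{1..N}. Y k (xs@[y])) = A"
        unfolding A_def by (intro sum.cong refl) (use dep_snoc[OF Q p0 dY _ len] in auto)
      then show ?thesis by (simp add: Z_def)
    qed
    have q1: "(\<Sum>y\<in>UNIV. Q$(xs!N)$y) = 1" and qn: "\<And>y. Q$(xs!N)$y \<ge> 0"
      using Q by (auto simp: transition_matrix_def)
    have "(\<Sum>y\<in>UNIV. Q$(xs!N)$y *\<^sub>R (norm (\<Sum>k\<in>{1..Suc N}. Y k (xs@[y])))\<^sup>2)
        = (\<Sum>y\<in>UNIV. Q$(xs!N)$y * (norm A)\<^sup>2 + 2 * (A \<bullet> (Q$(xs!N)$y *\<^sub>R Z y)) + Q$(xs!N)$y * (norm (Z y))\<^sup>2)"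
      unfolding sp norm_add_sq by (intro sum.cong refl) (simp add: algebra_simps)
    also have "\<dots> = (norm A)\<^sup>2 + 2 * (A \<bullet> (\<Sum>y\<in>UNIV. Q$(xs!N)$y *\<^sub>R Z y)) + (\<Sum>y\<in>UNIV. Q$(xs!N)$y * (norm (Z y))\<^sup>2)"
      by (simp add: sum.distrib inner_sum_right sum_distrib_left[symmetric] sum_distrib_right[symmetric] q1)
    also have "(\<Sum>y\<in>UNIV. Q$(xs!N)$y *\<^sub>R Z y) = 0" unfolding Z_def by (rule mart[OF len])
    also have "(\<Sum>y\<in>UNIV. Q$(xs!N)$y * (norm (Z y))\<^sup>2) \<le> (\<Sum>y\<in>UNIV. Q$(xs!N)$y * b\<^sup>2)"
    proof (rule sum_mono)
      fix y
      have "norm (Z y) \<le> b" unfolding Z_def by (rule bnd) simp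
      then have "(norm (Z y))\<^sup>2 \<le> b\<^sup>2" by (intro power_mono) auto
      then show "Q$(xs!N)$y * (norm (Z y))\<^sup>2 \<le> Q$(xs!N)$y * b\<^sup>2" using qn by (intro mult_left_mono) auto
    qed
    also have "(\<Sum>y\<in>UNIV. Q$(xs!N)$y * b\<^sup>2) = b\<^sup>2" by (simp add: sum_distrib_right[symmetric] q1)
    finally show ?thesis by (simp add: A_def)
  qed
  have "path_expect \<pi>0 Q (Suc N) (\<lambda>xs. (norm (\<Sum>k\<in>{1..Suc N}. Y k xs))\<^sup>2)
      \<le> path_expect \<pi>0 Q N (\<lambda>xs. (norm (\<Sum>k\<in>{1..N}. Y k xs))\<^sup>2 + b\<^sup>2)"
    unfolding expect_Suc by (rule expect_mono[OF Q p0]) (rule pw)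
  also have "\<dots> = path_expect \<pi>0 Q N (\<lambda>xs. (norm (\<Sum>k\<in>{1..N}. Y k xs))\<^sup>2) + b\<^sup>2"
    by (simp add: expect_add expect_const[OF Q p0])
  also have "\<dots> \<le> real N * b\<^sup>2 + b\<^sup>2" using Suc by simp
  finally show ?case by (simp add: algebra_simps)
qed

end

lemma sum_swap_tri:
  fixes v :: "nat \<Rightarrow> 'v::real_vector"
  shows "(\<Sum>k\<in>{1..N}. a k *\<^sub>R (\<Sum>m\<in>{1..k}. v m)) = (\<Sum>m\<in>{1..N}. (\<Sum>k\<in>{m..N}. a k) *\<^sub>R v m)"
proof (induction N)
  case 0
  then show ?case by simp
next
  case (Suc N)
  have "(\<Sum>m\<in>{1..Suc N}. (\<Sum>k\<in>{m..Suc N}. a k) *\<^sub>R v m)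
      = (\<Sum>m\<in>{1..Suc N}. (\<Sum>k\<in>{m..N}. a k) *\<^sub>R v m + a (Suc N) *\<^sub>R v m)"
    by (intro sum.cong refl) (simp add: scaleR_add_left)
  also have "\<dots> = (\<Sum>m\<in>{1..Suc N}. (\<Sum>k\<in>{m..N}. a k) *\<^sub>R v m) + a (Suc N) *\<^sub>R (\<Sum>m\<in>{1..Suc N}. v m)"
    by (simp only: sum.distrib scaleR_sum_right)
  also have "(\<Sum>m\<in>{1..Suc N}. (\<Sum>k\<in>{m..N}. a k) *\<^sub>R v m) = (\<Sum>m\<in>{1..N}. (\<Sum>k\<in>{m..N}. a k) *\<^sub>R v m)"
    by simp
  finally show ?case using Suc by simp
qed

lemma telescope_c:
  fixes x :: "nat \<Rightarrow> 'x" and c :: "'x \<Rightarrow> real" and g G :: "nat \<Rightarrow> 'x \<Rightarrow> real"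
  assumes g0: "\<And>z. g 0 z = c z - \<gamma>" and gS: "\<And>n z. g (Suc n) z = c z - \<gamma> + G n z"
  shows "m \<le> N \<Longrightarrow> (\<Sum>k\<in>{m..N}. c (x k)) = real (Suc N - m) * \<gamma> + g (N - m) (x m)
      + (\<Sum>k\<in>{Suc m..N}. g (N - k) (x k) - G (N - k) (x (k - 1)))"
proof (induction "N - m" arbitrary: m)
  case 0
  then have "m = N" by simp
  then show ?case by (simp add: g0)
next
  case (Suc d)
  have mN: "m < N" using Suc by simp
  have IH: "(\<Sum>k\<in>{Suc m..N}. c (x k)) = real (Suc N - Suc m) * \<gamma> + g (N - Suc m) (x (Suc m))
      + (\<Sum>k\<in>{Suc (Suc m)..N}. g (N - k) (x k) - G (N - k) (x (k - 1)))"
    using Suc mN by (intro Suc.hyps) auto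
  have s1: "(\<Sum>k\<in>{m..N}. c (x k)) = c (x m) + (\<Sum>k\<in>{Suc m..N}. c (x k))"
    using mN by (simp add: sum.atLeast_Suc_atMost)
  have s2: "(\<Sum>k\<in>{Suc m..N}. g (N - k) (x k) - G (N - k) (x (k - 1)))
      = (g (N - Suc m) (x (Suc m)) - G (N - Suc m) (x m))
        + (\<Sum>k\<in>{Suc (Suc m)..N}. g (N - k) (x k) - G (N - k) (x (k - 1)))"
    using mN by (simp add: sum.atLeast_Suc_atMost)
  have gm: "g (N - m) (x m) = c (x m) - \<gamma> + G (N - Suc m) (x m)"
    using gS[of "N - Suc m" "x m"] mN by (simp add: Suc_diff_Suc)
  have r: "real (Suc N - m) = real (Suc N - Suc m) + 1" using mN by simp
  show ?case unfolding s1 s2 IH gm r by (simp add: algebra_simps)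
qed


locale setting =
  fixes P :: "real^'p \<Rightarrow> real^'x::finite^'x"
    and U :: "(real^'p) set"
    and c :: "'x \<Rightarrow> real"
    and \<pi>0 :: "'x \<Rightarrow> real"
    and \<theta> :: "real^'p"
  assumes openU: "open U"
    and trans: "\<And>t. t \<in> U \<Longrightarrow> transition_matrix (P t)"
    and reg: "\<And>t. t \<in> U \<Longrightarrow> regular (P t)"
    and C1: "\<And>i j. C1_on (\<lambda>t. P t $ i $ j) U"
    and zgrad: "\<And>t i j. t \<in> U \<Longrightarrow> P t $ i $ j = 0 \<Longrightarrow> grad (\<lambda>s. P s $ i $ j) t = 0"
    and p0: "prob_dist \<pi>0"
    and thU: "\<theta> \<in> U"
begin

abbreviation "Q \<equiv> P \<theta>"

definition D :: "'x \<Rightarrow> 'x \<Rightarrow> real^'p" where "D i j = grad (\<lambda>t. P t $ i $ j) \<theta>"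
definition r :: "'x \<Rightarrow> 'x \<Rightarrow> real^'p" where "r i j = (1 / Q $ i $ j) *\<^sub>R D i j"
definition dpi :: "'x \<Rightarrow> real^'p" where "dpi k = grad (\<lambda>t. stat_dist (P t) k) \<theta>"
abbreviation "spi \<equiv> stat_dist Q"

lemma Qtrans: "transition_matrix Q" using trans thU by blast

lemma hasP: "t \<in> U \<Longrightarrow> ((\<lambda>s. P s $ i $ j) has_derivative (\<lambda>h. grad (\<lambda>s. P s $ i $ j) t \<bullet> h)) (at t)"
proof -
  assume t: "t \<in> U"
  obtain g where g: "\<forall>t\<in>U. ((\<lambda>s. P s $ i $ j) has_derivative (\<lambda>h. g t \<bullet> h)) (at t)"
    using C1[of i j] unfolding C1_on_def by blast
  then have "grad (\<lambda>s. P s $ i $ j) t = g t" using t by (intro grad_eq) blast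
  then show ?thesis using g t by simp
qed

lemma hasD: "((\<lambda>s. P s $ i $ j) has_derivative (\<lambda>h. D i j \<bullet> h)) (at \<theta>)"
  using hasP[OF thU] by (simp add: D_def)

lemma Q_r: "Q $ i $ j *\<^sub>R r i j = D i j"
  using zgrad[OF thU, of i j] by (cases "Q $ i $ j = 0") (auto simp: r_def D_def)

lemma sumD: "(\<Sum>j\<in>UNIV. D i j) = 0"
proof (rule grad_zero_on_open[OF _ openU thU])
  show "((\<lambda>t. (\<Sum>j\<in>UNIV. P t $ i $ j) - 1) has_derivative (\<lambda>h. (\<Sum>j\<in>UNIV. D i j) \<bullet> h)) (at \<theta>)"
    using has_derivative_diff[OF has_derivative_sum[of UNIV "\<lambda>j t. P t $ i $ j", OF hasD] has_derivative_const[of 1]]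
    by (simp add: inner_sum_left)
  show "\<And>s. s \<in> U \<Longrightarrow> (\<Sum>j\<in>UNIV. P s $ i $ j) - 1 = 0"
    using trans by (simp add: transition_matrix_def)
qed

lemma contr_at: "t \<in> U \<Longrightarrow> \<exists>C \<rho>. contracts (P t) C \<rho>"
  using ergodic trans reg by blast

lemma stat_at: "t \<in> U \<Longrightarrow> is_stationary (P t) (stat_dist (P t))"
  using contr_at stat_dist_props(1) trans by blast

lemma stat_formula: "t \<in> U \<Longrightarrow> stat_dist (P t) k =
    det (\<chi> i j. if j = k then 1 else Mz (P t) $ i $ j) / det (Mz (P t))"
  using contr_at stat_dist_props(2) trans by blast

lemma det_nz: "det (Mz Q) \<noteq> 0"
  using contr_at[OF thU] Mz_det Qtrans by blast

lemma Pdiff: "(\<lambda>t. P t $ i $ j) differentiable (at \<theta>)"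
  using hasD unfolding differentiable_def by blast

lemma Mz_diff: "(\<lambda>t. Mz (P t) $ i $ j) differentiable (at \<theta>)"
  unfolding Mz_def vec_lambda_beta
  by (intro differentiable_add differentiable_diff differentiable_const Pdiff)

lemma stat_diff: "(\<lambda>t. stat_dist (P t) k) differentiable (at \<theta>)"
proof -
  have e: "(\<lambda>t. (\<chi> i j. if j = k then 1 else Mz (P t) $ i $ j) $ i $ j) differentiable (at \<theta>)" for i j
    by (cases "j = k") (simp_all add: Mz_diff)
  have "(\<lambda>t. det (\<chi> i j. if j = k then 1 else Mz (P t) $ i $ j) / det (Mz (P t))) differentiable (at \<theta>)"
    by (intro differentiable_divide det_differentiable e Mz_diff det_nz)
  then obtain F' where F': "((\<lambda>t. det (\<chi> i j. if j = k then 1 else Mz (P t) $ i $ j) / det (Mz (P t)))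
      has_derivative F') (at \<theta>)" unfolding differentiable_def by blast
  have "((\<lambda>t. stat_dist (P t) k) has_derivative F') (at \<theta>)"
    by (rule has_derivative_transform_within_open[OF F' openU thU]) (simp add: stat_formula)
  then show ?thesis unfolding differentiable_def by blast
qed

lemma hasdpi: "((\<lambda>t. stat_dist (P t) k) has_derivative (\<lambda>h. dpi k \<bullet> h)) (at \<theta>)"
  unfolding dpi_def by (rule grad_works[OF stat_diff])

lemma sum_dpi: "(\<Sum>k\<in>UNIV. dpi k) = 0"
proof (rule grad_zero_on_open[OF _ openU thU])
  show "((\<lambda>t. (\<Sum>k\<in>UNIV. stat_dist (P t) k) - 1) has_derivative (\<lambda>h. (\<Sum>k\<in>UNIV. dpi k) \<bullet> h)) (at \<theta>)"
    using has_derivative_diff[OF has_derivative_sum[of UNIV "\<lambda>k t. stat_dist (P t) k", OF hasdpi] has_derivative_const[of 1]]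
    by (simp add: inner_sum_left)
  show "\<And>s. s \<in> U \<Longrightarrow> (\<Sum>k\<in>UNIV. stat_dist (P s) k) - 1 = 0"
    using stat_at by (simp add: is_stationary_def prob_dist_def)
qed

lemma dpi_eq: "dpi j = (\<Sum>i\<in>UNIV. spi i *\<^sub>R D i j + Q $ i $ j *\<^sub>R dpi i)"
proof -
  define w where "w = dpi j - (\<Sum>i\<in>UNIV. spi i *\<^sub>R D i j + Q $ i $ j *\<^sub>R dpi i)"
  have d: "((\<lambda>t. stat_dist (P t) j - (\<Sum>i\<in>UNIV. stat_dist (P t) i * P t $ i $ j)) has_derivative
      (\<lambda>h. dpi j \<bullet> h - (\<Sum>i\<in>UNIV. spi i * (D i j \<bullet> h) + (dpi i \<bullet> h) * Q $ i $ j))) (at \<theta>)"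
    by (intro has_derivative_diff has_derivative_sum has_derivative_mult hasdpi hasD)
  have "(\<lambda>h. dpi j \<bullet> h - (\<Sum>i\<in>UNIV. spi i * (D i j \<bullet> h) + (dpi i \<bullet> h) * Q $ i $ j)) = (\<lambda>h. w \<bullet> h)"
    by (rule ext) (simp add: w_def inner_diff_left inner_sum_left inner_add_left mult.commute)
  with d have d': "((\<lambda>t. stat_dist (P t) j - (\<Sum>i\<in>UNIV. stat_dist (P t) i * P t $ i $ j)) has_derivative
      (\<lambda>h. w \<bullet> h)) (at \<theta>)" by simp
  have "w = 0"
    by (rule grad_zero_on_open[OF d' openU thU]) (use stat_at in \<open>simp add: is_stationary_def\<close>)
  then show ?thesis by (simp add: w_def)
qed

lemma grad_obj: "grad (\<lambda>t. \<Sum>x\<in>UNIV. c x * stat_dist (P t) x) \<theta> = (\<Sum>x\<in>UNIV. c x *\<^sub>R dpi x)"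
proof (rule grad_eq)
  have "((\<lambda>t. \<Sum>x\<in>UNIV. c x * stat_dist (P t) x) has_derivative (\<lambda>h. \<Sum>x\<in>UNIV. c x * (dpi x \<bullet> h))) (at \<theta>)"
    by (intro has_derivative_sum has_derivative_mult_right hasdpi)
  then show "((\<lambda>t. \<Sum>x\<in>UNIV. c x * stat_dist (P t) x) has_derivative (\<lambda>h. (\<Sum>x\<in>UNIV. c x *\<^sub>R dpi x) \<bullet> h)) (at \<theta>)"
    by (simp add: inner_sum_left)
qed

end


context setting begin

definition Cr :: "real \<times> real" where "Cr = (SOME p. contracts Q (fst p) (snd p))"
abbreviation "KC \<equiv> fst Cr"
abbreviation "rho \<equiv> snd Cr"

lemma contrQ: "contracts Q KC rho"
proof -
  obtain C \<rho> where "contracts Q C \<rho>" using contr_at[OF thU] by blast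
  then have "\<exists>p. contracts Q (fst p) (snd p)" by (intro exI[of _ "(C, \<rho>)"]) simp
  then show ?thesis unfolding Cr_def by (rule someI_ex)
qed

lemma KC_rho: "KC > 0" "0 < rho" "rho < 1" using contrQ by (auto simp: contracts_def)

lemma statQ: "is_stationary Q spi" using stat_at[OF thU] .

lemma spi_st: "\<And>j. (\<Sum>i\<in>UNIV. spi i * Q$i$j) = spi j" and spi_pd: "prob_dist spi"
  using statQ by (auto simp: is_stationary_def)

definition \<gamma> :: real where "\<gamma> = (\<Sum>j\<in>UNIV. spi j * c j)"
definition Sc :: real where "Sc = (\<Sum>j\<in>UNIV. \<bar>c j\<bar>)"
definition e :: "nat \<Rightarrow> 'x \<Rightarrow> real" where "e b j = act (mat_pow Q b) c j - \<gamma>"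

lemma c_bounds: "\<forall>j. - Sc \<le> c j \<and> c j \<le> Sc"
proof
  fix j
  have "\<bar>c j\<bar> \<le> Sc" unfolding Sc_def by (rule member_le_sum[of j UNIV "\<lambda>j. \<bar>c j\<bar>"]) auto
  then show "- Sc \<le> c j \<and> c j \<le> Sc" by linarith
qed

lemma e_bound: "\<bar>e b j\<bar> \<le> KC * rho ^ b * (2 * Sc)"
  using stat_dev[OF contrQ spi_pd spi_st c_bounds, of b j] by (simp add: e_def \<gamma>_def)

definition mu :: "nat \<Rightarrow> 'x \<Rightarrow> real" where "mu a i = (\<Sum>x\<in>UNIV. \<pi>0 x * mat_pow Q a $ x $ i)"

lemma mu_bound: "\<bar>mu a i - spi i\<bar> \<le> KC * rho ^ a"
proof -
  have d: "\<bar>mat_pow Q a $ x $ i - spi i\<bar> \<le> KC * rho ^ a" for x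
    using stat_dev[OF contrQ spi_pd spi_st indicator_bounds[of i], of a x]
    by (simp add: act_indicator if_distrib cong: if_cong)
  have s1: "(\<Sum>x\<in>UNIV. \<pi>0 x) = 1" and nn: "\<And>x. \<pi>0 x \<ge> 0" using p0 by (auto simp: prob_dist_def)
  have "mu a i - spi i = (\<Sum>x\<in>UNIV. \<pi>0 x * (mat_pow Q a $ x $ i - spi i))"
    by (simp add: mu_def right_diff_distrib sum_subtractf s1 flip: sum_distrib_right)
  also have "\<bar>\<dots>\<bar> \<le> (\<Sum>x\<in>UNIV. \<pi>0 x * (KC * rho ^ a))"
    by (rule order_trans[OF sum_abs], rule sum_mono) (use d nn in \<open>auto simp: abs_mult intro: mult_left_mono\<close>)
  also have "\<dots> = KC * rho ^ a" by (simp add: s1 flip: sum_distrib_right)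
  finally show ?thesis .
qed

definition w :: "('x \<Rightarrow> real) \<Rightarrow> ('x \<Rightarrow> real) \<Rightarrow> real^'p" where
  "w \<mu> f = (\<Sum>i\<in>UNIV. \<Sum>j\<in>UNIV. (\<mu> i * f j) *\<^sub>R D i j)"

definition pd :: "('x \<Rightarrow> real) \<Rightarrow> real^'p" where "pd f = (\<Sum>j\<in>UNIV. f j *\<^sub>R dpi j)"

lemma w_shift: "w \<mu> (\<lambda>j. f j + a) = w \<mu> f"
proof -
  have "w \<mu> (\<lambda>j. f j + a) = w \<mu> f + (\<Sum>i\<in>UNIV. (\<mu> i * a) *\<^sub>R (\<Sum>j\<in>UNIV. D i j))"
    by (simp add: w_def distrib_left scaleR_add_left sum.distrib scaleR_sum_right)
  then show ?thesis by (simp add: sumD)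
qed

lemma w_diff: "w (\<lambda>i. \<mu> i - \<nu> i) f = w \<mu> f - w \<nu> f"
  by (simp add: w_def left_diff_distrib scaleR_diff_left sum_subtractf)

lemma pd_shift: "pd (\<lambda>j. f j + a) = pd f"
proof -
  have "pd (\<lambda>j. f j + a) = pd f + a *\<^sub>R (\<Sum>j\<in>UNIV. dpi j)"
    by (simp add: pd_def scaleR_add_left sum.distrib scaleR_sum_right)
  then show ?thesis by (simp add: sum_dpi)
qed

lemma pd_step: "pd f - pd (act Q f) = w spi f"
proof -
  have "pd (act Q f) = (\<Sum>j\<in>UNIV. f j *\<^sub>R (\<Sum>i\<in>UNIV. Q $ i $ j *\<^sub>R dpi i))"
    unfolding pd_def act_def scaleR_sum_left scaleR_sum_right
    by (subst sum.swap) (simp add: mult.commute)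
  moreover have "pd f = (\<Sum>j\<in>UNIV. f j *\<^sub>R (\<Sum>i\<in>UNIV. spi i *\<^sub>R D i j) + f j *\<^sub>R (\<Sum>i\<in>UNIV. Q $ i $ j *\<^sub>R dpi i))"
    unfolding pd_def by (subst dpi_eq) (simp add: sum.distrib scaleR_add_right)
  moreover have "(\<Sum>j\<in>UNIV. f j *\<^sub>R (\<Sum>i\<in>UNIV. spi i *\<^sub>R D i j)) = w spi f"
    unfolding w_def scaleR_sum_right by (subst sum.swap) (simp add: mult.commute)
  ultimately show ?thesis by (simp add: sum.distrib)
qed

lemma grad_formula:
  "grad (\<lambda>t. \<Sum>x\<in>UNIV. c x * stat_dist (P t) x) \<theta>
     = (\<Sum>b<B. w spi (act (mat_pow Q b) c)) + pd (act (mat_pow Q B) c)"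
proof (induction B)
  case 0
  then show ?case by (simp add: grad_obj act_id[OF Qtrans p0] pd_def)
next
  case (Suc B)
  have "act Q (act (mat_pow Q B) c) = act (mat_pow Q (Suc B)) c" by (simp add: act_mult)
  then show ?case using Suc pd_step[of "act (mat_pow Q B) c"] by (simp add: algebra_simps)
qed

lemma grad_formula_e:
  "grad (\<lambda>t. \<Sum>x\<in>UNIV. c x * stat_dist (P t) x) \<theta> = (\<Sum>b<B. w spi (e b)) + pd (e B)"
proof -
  have a: "act (mat_pow Q b) c = (\<lambda>j. e b j + \<gamma>)" for b by (simp add: e_def)
  show ?thesis unfolding grad_formula[of B] a w_shift pd_shift ..
qed

end


lemma geom_sum_le:
  fixes \<rho> :: real assumes "0 \<le> \<rho>" "\<rho> < 1"
  shows "(\<Sum>k\<in>{1..N}. \<rho>^k) \<le> 1/(1-\<rho>)"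
proof -
  have "(\<Sum>k\<in>{1..N}. \<rho>^k) \<le> (\<Sum>k\<in>{..<Suc N}. \<rho>^k)"
    by (rule sum_mono2) (use assms in auto)
  also have "\<dots> = (if \<rho> = 1 then of_nat (Suc N) else (1 - \<rho>^Suc N)/(1-\<rho>))" by (rule sum_gp_strict)
  also have "\<dots> = (1 - \<rho>^Suc N)/(1-\<rho>)" using assms by simp
  also have "\<dots> \<le> 1/(1-\<rho>)" using assms by (intro divide_right_mono) auto
  finally show ?thesis .
qed

lemma ar_geom_identity:
  fixes \<rho> :: real
  shows "(1-\<rho>)^2 * (\<Sum>k\<in>{1..N}. real k * \<rho>^(k-1)) = 1 - real (Suc N) * \<rho>^N + real N * \<rho>^(Suc N)"
proof (induction N)
  case 0
  then show ?case by simp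
next
  case (Suc N)
  have "(1-\<rho>)^2 * (\<Sum>k\<in>{1..Suc N}. real k * \<rho>^(k-1))
      = (1-\<rho>)^2 * (\<Sum>k\<in>{1..N}. real k * \<rho>^(k-1)) + (1-\<rho>)^2 * (real (Suc N) * \<rho>^N)"
    by (simp add: distrib_left)
  also have "\<dots> = 1 - real (Suc N) * \<rho>^N + real N * \<rho>^(Suc N) + (1-\<rho>)^2 * (real (Suc N) * \<rho>^N)"
    using Suc by simp
  also have "\<dots> = 1 - real (Suc (Suc N)) * \<rho>^(Suc N) + real (Suc N) * \<rho>^(Suc (Suc N))"
    by (simp add: power2_eq_square algebra_simps)
  finally show ?case .
qed

lemma ar_geom_sum_le:
  fixes \<rho> :: real assumes "0 \<le> \<rho>" "\<rho> < 1"
  shows "(\<Sum>k\<in>{1..N}. real k * \<rho>^(k-1)) \<le> 1/(1-\<rho>)^2"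
proof -
  have "\<rho>^(Suc N) \<le> \<rho>^N" using assms by (simp add: mult_left_le_one_le)
  then have "real N * \<rho>^(Suc N) \<le> real (Suc N) * \<rho>^N"
    using assms by (intro mult_mono) auto
  then have "(1-\<rho>)^2 * (\<Sum>k\<in>{1..N}. real k * \<rho>^(k-1)) \<le> 1" unfolding ar_geom_identity by simp
  moreover have "(1-\<rho>)^2 > 0" using assms by simp
  ultimately show ?thesis by (simp add: field_simps)
qed

context setting begin

lemma score_eq: "score P \<theta> xs k = (\<Sum>m\<in>{1..k}. r (xs!(m-1)) (xs!m))"
  by (simp add: score_def r_def D_def)

lemma E_term:
  assumes m1: "1 \<le> m" and mk: "m \<le> k" and kN: "k \<le> N"
  shows "path_expect \<pi>0 Q N (\<lambda>xs. c (xs!k) *\<^sub>R r (xs!(m-1)) (xs!m)) = w (mu (m-1)) (act (mat_pow Q (k-m)) c)"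
proof -
  have dep1: "dep k (\<lambda>xs. c (xs!k) *\<^sub>R r (xs!(m-1)) (xs!m))"
    unfolding dep_def[OF Qtrans p0] using mk by simp
  have depF: "dep m (\<lambda>xs. r (xs!(m-1)) (xs!m))"
    unfolding dep_def[OF Qtrans p0] by simp
  obtain m' where m': "m = Suc m'" using m1 by (cases m) auto
  define f where "f = act (mat_pow Q (k-m)) c"
  define \<psi> where "\<psi> i = (\<Sum>y\<in>UNIV. f y *\<^sub>R D i y)" for i
  have "path_expect \<pi>0 Q N (\<lambda>xs. c (xs!k) *\<^sub>R r (xs!(m-1)) (xs!m))
      = path_expect \<pi>0 Q k (\<lambda>xs. c (xs!k) *\<^sub>R r (xs!(m-1)) (xs!m))"
    by (rule expect_prefix[OF Qtrans p0 dep1 kN])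
  also have "\<dots> = path_expect \<pi>0 Q m (\<lambda>xs. f (xs!m) *\<^sub>R r (xs!(m-1)) (xs!m))"
    unfolding f_def by (rule expect_last[OF Qtrans p0 depF mk])
  also have "\<dots> = path_expect \<pi>0 Q m' (\<lambda>xs. \<psi> (xs!m'))"
    unfolding m' expect_Suc
  proof (rule expect_cong)
    fix xs :: "'x list" assume "xs \<in> paths m'"
    then have l: "length xs = Suc m'" by (simp add: paths_def)
    have "(\<Sum>y\<in>UNIV. Q $ (xs ! m') $ y *\<^sub>R (f ((xs @ [y]) ! Suc m') *\<^sub>R r ((xs @ [y]) ! (Suc m' - 1)) ((xs @ [y]) ! Suc m')))
        = (\<Sum>y\<in>UNIV. f y *\<^sub>R (Q $ (xs ! m') $ y *\<^sub>R r (xs ! m') y))"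
      using l by (intro sum.cong refl) (simp add: nth_append)
    also have "\<dots> = \<psi> (xs ! m')" by (simp add: Q_r \<psi>_def)
    finally show "(\<Sum>y\<in>UNIV. Q $ (xs ! m') $ y *\<^sub>R (f ((xs @ [y]) ! Suc m') *\<^sub>R r ((xs @ [y]) ! (Suc m' - 1)) ((xs @ [y]) ! Suc m')))
        = \<psi> (xs ! m')" .
  qed
  also have "\<dots> = (\<Sum>i\<in>UNIV. mu m' i *\<^sub>R \<psi> i)"
    unfolding expect_marg[OF Qtrans p0] mu_def ..
  also have "\<dots> = w (mu (m-1)) f"
    by (simp add: m' w_def \<psi>_def scaleR_sum_right mult.commute)
  finally show ?thesis by (simp add: f_def)
qed

lemma E_est:
  "path_expect \<pi>0 Q N (sf_estimator P \<theta> c N)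
     = (1 / real N) *\<^sub>R (\<Sum>k\<in>{1..N}. \<Sum>m\<in>{1..k}. w (mu (m-1)) (act (mat_pow Q (k-m)) c))"
proof -
  have "path_expect \<pi>0 Q N (sf_estimator P \<theta> c N)
      = (1 / real N) *\<^sub>R path_expect \<pi>0 Q N (\<lambda>xs. \<Sum>k\<in>{1..N}. \<Sum>m\<in>{1..k}. c (xs!k) *\<^sub>R r (xs!(m-1)) (xs!m))"
    unfolding expect_scale[symmetric]
    by (intro expect_cong) (simp add: sf_estimator_def score_eq scaleR_sum_right)
  also have "path_expect \<pi>0 Q N (\<lambda>xs. \<Sum>k\<in>{1..N}. \<Sum>m\<in>{1..k}. c (xs!k) *\<^sub>R r (xs!(m-1)) (xs!m))
      = (\<Sum>k\<in>{1..N}. \<Sum>m\<in>{1..k}. w (mu (m-1)) (act (mat_pow Q (k-m)) c))"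
    unfolding expect_sum by (intro sum.cong refl E_term) auto
  finally show ?thesis .
qed

definition WD :: real where "WD = (\<Sum>i\<in>UNIV. \<Sum>j\<in>UNIV. norm (D i j))"
definition Wdp :: real where "Wdp = (\<Sum>j\<in>UNIV. norm (dpi j))"

lemma w_bound:
  assumes "\<And>i. \<bar>\<mu> i\<bar> \<le> \<alpha>" "\<And>j. \<bar>f j\<bar> \<le> \<beta>"
  shows "norm (w \<mu> f) \<le> \<alpha> * \<beta> * WD"
proof -
  have a0: "0 \<le> \<alpha>" using assms(1)[of undefined] by linarith
  have b0: "0 \<le> \<beta>" using assms(2)[of undefined] by linarith
  have "norm (w \<mu> f) \<le> (\<Sum>i\<in>UNIV. \<Sum>j\<in>UNIV. norm ((\<mu> i * f j) *\<^sub>R D i j))"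
    unfolding w_def by (rule order_trans[OF norm_sum], rule sum_mono, rule norm_sum)
  also have "\<dots> \<le> (\<Sum>i\<in>UNIV. \<Sum>j\<in>UNIV. (\<alpha> * \<beta>) * norm (D i j))"
  proof (intro sum_mono)
    fix i j
    have "\<bar>\<mu> i * f j\<bar> \<le> \<alpha> * \<beta>" unfolding abs_mult using assms a0 b0 by (intro mult_mono) auto
    then show "norm ((\<mu> i * f j) *\<^sub>R D i j) \<le> (\<alpha> * \<beta>) * norm (D i j)"
      by (simp add: mult_right_mono)
  qed
  also have "\<dots> = \<alpha> * \<beta> * WD" by (simp add: WD_def sum_distrib_left)
  finally show ?thesis .
qed

lemma pd_bound:
  assumes "\<And>j. \<bar>f j\<bar> \<le> \<beta>"
  shows "norm (pd f) \<le> \<beta> * Wdp"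
proof -
  have "norm (pd f) \<le> (\<Sum>j\<in>UNIV. norm (f j *\<^sub>R dpi j))" unfolding pd_def by (rule norm_sum)
  also have "\<dots> \<le> (\<Sum>j\<in>UNIV. \<beta> * norm (dpi j))"
    by (rule sum_mono) (use assms in \<open>auto intro: mult_right_mono\<close>)
  also have "\<dots> = \<beta> * Wdp" by (simp add: Wdp_def sum_distrib_left)
  finally show ?thesis .
qed

abbreviation "G0 \<equiv> grad (\<lambda>t. \<Sum>x\<in>UNIV. c x * stat_dist (P t) x) \<theta>"

lemma bias_k:
  "norm ((\<Sum>m\<in>{1..k}. w (mu (m-1)) (act (mat_pow Q (k-m)) c)) - G0)
     \<le> (KC * KC * (2 * Sc) * WD) * (real k * rho^(k-1)) + (KC * (2 * Sc) * Wdp) * rho^k"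
proof -
  have a: "act (mat_pow Q b) c = (\<lambda>j. e b j + \<gamma>)" for b by (simp add: e_def)
  have t: "w (mu a) (act (mat_pow Q (k - Suc a)) c) = w spi (e (k - Suc a)) + w (\<lambda>i. mu a i - spi i) (e (k - Suc a))"
    for a unfolding a w_shift w_diff by simp
  have "(\<Sum>m\<in>{1..k}. w (mu (m-1)) (act (mat_pow Q (k-m)) c))
      = (\<Sum>a<k. w (mu a) (act (mat_pow Q (k - Suc a)) c))"
    using sum.atLeast1_atMost_eq[of "\<lambda>m. w (mu (m-1)) (act (mat_pow Q (k-m)) c)" k] by simp
  also have "\<dots> = (\<Sum>a<k. w spi (e (k - Suc a))) + (\<Sum>a<k. w (\<lambda>i. mu a i - spi i) (e (k - Suc a)))"
    unfolding t sum.distrib ..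
  also have "(\<Sum>a<k. w spi (e (k - Suc a))) = (\<Sum>b<k. w spi (e b))"
    by (rule sum.nat_diff_reindex)
  finally have eq: "(\<Sum>m\<in>{1..k}. w (mu (m-1)) (act (mat_pow Q (k-m)) c)) - G0
      = (\<Sum>a<k. w (\<lambda>i. mu a i - spi i) (e (k - Suc a))) - pd (e k)"
    unfolding grad_formula_e[of k] by simp
  have "norm ((\<Sum>a<k. w (\<lambda>i. mu a i - spi i) (e (k - Suc a))) - pd (e k))
      \<le> (\<Sum>a<k. norm (w (\<lambda>i. mu a i - spi i) (e (k - Suc a)))) + norm (pd (e k))"
    by (rule order_trans[OF norm_triangle_ineq4]) (simp add: norm_sum)
  also have "\<dots> \<le> (\<Sum>a<k. (KC * KC * (2 * Sc) * WD) * rho^(k-1)) + (KC * (2 * Sc) * Wdp) * rho^k"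
  proof (rule add_mono)
    show "(\<Sum>a<k. norm (w (\<lambda>i. mu a i - spi i) (e (k - Suc a)))) \<le> (\<Sum>a<k. (KC * KC * (2 * Sc) * WD) * rho^(k-1))"
    proof (rule sum_mono)
      fix a assume "a \<in> {..<k}"
      then have ak: "a + (k - Suc a) = k - 1" by auto
      have "norm (w (\<lambda>i. mu a i - spi i) (e (k - Suc a))) \<le> (KC * rho ^ a) * (KC * rho ^ (k - Suc a) * (2 * Sc)) * WD"
        by (rule w_bound) (auto intro: mu_bound e_bound)
      also have "\<dots> = (KC * KC * (2 * Sc) * WD) * rho^(a + (k - Suc a))" by (simp add: power_add)
      finally show "norm (w (\<lambda>i. mu a i - spi i) (e (k - Suc a))) \<le> (KC * KC * (2 * Sc) * WD) * rho^(k-1)"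
        unfolding ak .
    qed
    show "norm (pd (e k)) \<le> (KC * (2 * Sc) * Wdp) * rho^k"
      using pd_bound[of "e k" "KC * rho ^ k * (2 * Sc)", OF e_bound] by (simp add: mult_ac)
  qed
  finally show ?thesis unfolding eq by (simp add: mult_ac)
qed

lemma WD_nn: "WD \<ge> 0" and Wdp_nn: "Wdp \<ge> 0" and Sc_nn: "Sc \<ge> 0"
  by (auto simp: WD_def Wdp_def Sc_def intro!: sum_nonneg)

definition K1 :: real where
  "K1 = (KC * KC * (2 * Sc) * WD) * (1/(1-rho)^2) + (KC * (2 * Sc) * Wdp) * (1/(1-rho))"

lemma bias:
  assumes N: "N \<ge> 1"
  shows "norm (path_expect \<pi>0 Q N (sf_estimator P \<theta> c N) - G0) \<le> K1 / real N"
proof -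
  define B where "B k = (\<Sum>m\<in>{1..k}. w (mu (m-1)) (act (mat_pow Q (k-m)) c)) - G0" for k
  have NN: "real N > 0" using N by simp
  have bk: "norm (B k) \<le> (KC * KC * (2 * Sc) * WD) * (real k * rho^(k-1)) + (KC * (2 * Sc) * Wdp) * rho^k" for k
    unfolding B_def by (rule bias_k)
  have "(\<Sum>k\<in>{1..N}. G0) = real N *\<^sub>R G0" by (simp only: sum_constant_scaleR) simp
  then have "path_expect \<pi>0 Q N (sf_estimator P \<theta> c N) - G0 = (1 / real N) *\<^sub>R (\<Sum>k\<in>{1..N}. B k)"
    unfolding E_est B_def sum_subtractf using NN by (simp add: scaleR_diff_right)
  then have "norm (path_expect \<pi>0 Q N (sf_estimator P \<theta> c N) - G0) = (1 / real N) * norm (\<Sum>k\<in>{1..N}. B k)"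
    using NN by simp
  also have "\<dots> \<le> (1 / real N) * (\<Sum>k\<in>{1..N}. (KC * KC * (2 * Sc) * WD) * (real k * rho^(k-1)) + (KC * (2 * Sc) * Wdp) * rho^k)"
    using NN by (intro mult_left_mono order_trans[OF norm_sum] sum_mono bk) auto
  also have "(\<Sum>k\<in>{1..N}. (KC * KC * (2 * Sc) * WD) * (real k * rho^(k-1)) + (KC * (2 * Sc) * Wdp) * rho^k)
      = (KC * KC * (2 * Sc) * WD) * (\<Sum>k\<in>{1..N}. real k * rho^(k-1)) + (KC * (2 * Sc) * Wdp) * (\<Sum>k\<in>{1..N}. rho^k)"
    by (simp add: sum.distrib sum_distrib_left)
  also have "\<dots> \<le> K1" unfolding K1_def
    using KC_rho WD_nn Wdp_nn Sc_nn
    by (intro add_mono mult_left_mono ar_geom_sum_le geom_sum_le) auto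
  finally show ?thesis using NN by (simp add: divide_right_mono mult.commute)
qed

end


lemma act_sum: "act A (\<lambda>j. \<Sum>l\<in>L. f l j) i = (\<Sum>l\<in>L. act A (f l) i)"
  unfolding act_def by (simp add: sum_distrib_left sum.swap[of _ L])

lemma act_diff_const: "transition_matrix A \<Longrightarrow> act A (\<lambda>j. f j - a) i = act A f i - a"
  unfolding act_def transition_matrix_def
  by (simp add: right_diff_distrib sum_subtractf flip: sum_distrib_right)

context setting begin

definition gg :: "nat \<Rightarrow> 'x \<Rightarrow> real" where "gg n j = (\<Sum>l\<in>{..n}. e l j)"
definition GG :: "nat \<Rightarrow> 'x \<Rightarrow> real" where "GG n j = act Q (gg n) j"

lemma gg0: "gg 0 z = c z - \<gamma>"
  by (simp add: gg_def e_def act_id[OF Qtrans p0])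

lemma act_e: "act Q (e l) z = e (Suc l) z"
  unfolding e_def act_diff_const[OF Qtrans] by (simp add: act_mult)

lemma ggS: "gg (Suc n) z = c z - \<gamma> + GG n z"
proof -
  have "gg (Suc n) z = e 0 z + (\<Sum>l\<in>{..n}. e (Suc l) z)"
    unfolding gg_def by (rule sum.atMost_Suc_shift)
  also have "(\<Sum>l\<in>{..n}. e (Suc l) z) = GG n z"
    unfolding GG_def gg_def act_sum by (simp add: act_e)
  finally show ?thesis by (simp add: e_def act_id[OF Qtrans p0])
qed

definition Gb :: real where "Gb = KC * (2 * Sc) / (1 - rho)"

lemma gg_bound: "\<bar>gg n j\<bar> \<le> Gb"
proof -
  have "\<bar>gg n j\<bar> \<le> (\<Sum>l\<in>{..n}. KC * rho ^ l * (2 * Sc))"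
    unfolding gg_def by (rule order_trans[OF sum_abs], rule sum_mono, rule e_bound)
  also have "\<dots> = KC * (2 * Sc) * (\<Sum>l<Suc n. rho ^ l)"
    by (simp add: sum_distrib_left sum_distrib_right lessThan_Suc_atMost mult_ac)
  also have "(\<Sum>l<Suc n. rho ^ l) = (1 - rho ^ Suc n) / (1 - rho)"
    using KC_rho sum_gp_strict[of rho "Suc n"] by simp
  also have "KC * (2 * Sc) * ((1 - rho ^ Suc n) / (1 - rho)) \<le> KC * (2 * Sc) * (1 / (1 - rho))"
    using KC_rho Sc_nn by (intro mult_left_mono divide_right_mono) auto
  finally show ?thesis by (simp add: Gb_def)
qed

lemma GG_bound: "\<bar>GG n j\<bar> \<le> Gb"
proof -
  have l: "- Gb \<le> gg n j'" and u: "gg n j' \<le> Gb" for j' using gg_bound[of n j'] by linarith+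
  have "- Gb \<le> GG n j" "GG n j \<le> Gb"
    unfolding GG_def using act_bounds[OF Qtrans, of "- Gb" "gg n" Gb, OF l u] by blast+
  then show ?thesis by linarith
qed

definition Rr :: real where "Rr = (\<Sum>i\<in>UNIV. \<Sum>j\<in>UNIV. norm (r i j))"

lemma r_bound: "norm (r i j) \<le> Rr"
proof -
  have "norm (r i j) \<le> (\<Sum>j\<in>UNIV. norm (r i j))" by (rule member_le_sum) auto
  also have "\<dots> \<le> Rr" unfolding Rr_def
    by (rule member_le_sum[of i UNIV "\<lambda>i. \<Sum>j\<in>UNIV. norm (r i j)"]) (auto intro: sum_nonneg)
  finally show ?thesis .
qed

lemma Rr_nn: "Rr \<ge> 0" unfolding Rr_def by (auto intro!: sum_nonneg)

lemma score_bound: "norm (score P \<theta> xs k) \<le> real k * Rr"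
proof -
  have "norm (score P \<theta> xs k) \<le> (\<Sum>m\<in>{1..k}. Rr)"
    unfolding score_eq by (rule order_trans[OF norm_sum], rule sum_mono, rule r_bound)
  then show ?thesis by simp
qed

lemma score_take: "k < n \<Longrightarrow> score P \<theta> (take n xs) k = score P \<theta> xs k"
  unfolding score_eq by (intro sum.cong refl) auto

lemma score_snoc: "k < length xs \<Longrightarrow> score P \<theta> (xs @ [y]) k = score P \<theta> xs k"
  unfolding score_eq by (intro sum.cong refl) (auto simp: nth_append)

definition Del :: "nat \<Rightarrow> 'x list \<Rightarrow> nat \<Rightarrow> real" where
  "Del N xs k = gg (N - k) (xs ! k) - GG (N - k) (xs ! (k - 1))"

definition A1 :: "nat \<Rightarrow> 'x list \<Rightarrow> real^'p" where
  "A1 N xs = (\<Sum>m\<in>{1..N}. (real (Suc N - m) * \<gamma>) *\<^sub>R r (xs!(m-1)) (xs!m))"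
definition A2 :: "nat \<Rightarrow> 'x list \<Rightarrow> real^'p" where
  "A2 N xs = (\<Sum>m\<in>{1..N}. gg (N - m) (xs ! m) *\<^sub>R r (xs!(m-1)) (xs!m))"
definition A3 :: "nat \<Rightarrow> 'x list \<Rightarrow> real^'p" where
  "A3 N xs = (\<Sum>k\<in>{1..N}. Del N xs k *\<^sub>R score P \<theta> xs (k - 1))"

lemma decomp:
  "(\<Sum>k\<in>{1..N}. c (xs ! k) *\<^sub>R score P \<theta> xs k) = A1 N xs + A2 N xs + A3 N xs"
proof -
  define v where "v m = r (xs!(m-1)) (xs!m)" for m
  have sc: "score P \<theta> xs k = (\<Sum>m\<in>{1..k}. v m)" for k by (simp add: score_eq v_def)
  have "(\<Sum>k\<in>{1..N}. c (xs ! k) *\<^sub>R score P \<theta> xs k) = (\<Sum>m\<in>{1..N}. (\<Sum>k\<in>{m..N}. c (xs ! k)) *\<^sub>R v m)"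
    unfolding sc by (rule sum_swap_tri)
  also have "\<dots> = (\<Sum>m\<in>{1..N}. (real (Suc N - m) * \<gamma> + gg (N - m) (xs ! m)
      + (\<Sum>k\<in>{Suc m..N}. Del N xs k)) *\<^sub>R v m)"
    unfolding Del_def
    by (intro sum.cong refl, subst telescope_c[of gg c \<gamma> GG]) (auto simp: gg0 ggS)
  also have "\<dots> = A1 N xs + A2 N xs + (\<Sum>m\<in>{1..N}. (\<Sum>k\<in>{Suc m..N}. Del N xs k) *\<^sub>R v m)"
    unfolding A1_def A2_def v_def by (simp add: scaleR_add_left sum.distrib)
  also have "(\<Sum>m\<in>{1..N}. (\<Sum>k\<in>{Suc m..N}. Del N xs k) *\<^sub>R v m) = A3 N xs"
  proof -
    have s1: "(\<Sum>k\<in>{1..N}. Del N xs k *\<^sub>R (\<Sum>m\<in>{1..k}. v m))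
        = (\<Sum>m\<in>{1..N}. (\<Sum>k\<in>{m..N}. Del N xs k) *\<^sub>R v m)" by (rule sum_swap_tri)
    have s2: "(\<Sum>k\<in>{1..N}. Del N xs k *\<^sub>R (\<Sum>m\<in>{1..k}. v m))
        = A3 N xs + (\<Sum>k\<in>{1..N}. Del N xs k *\<^sub>R v k)"
    proof -
      have "(\<Sum>m\<in>{1..k}. v m) = score P \<theta> xs (k - 1) + v k" if "k \<in> {1..N}" for k
      proof -
        have ins: "{1..k} = insert k {1..k-1}" using that by auto
        have nk: "k \<notin> {1..k-1}" using that by auto
        show ?thesis unfolding sc ins sum.insert[OF finite_atLeastAtMost nk] by (simp add: add.commute)
      qed
      then show ?thesis unfolding A3_def
        by (simp add: scaleR_add_right sum.distrib)
    qed
    have s3: "(\<Sum>m\<in>{1..N}. (\<Sum>k\<in>{m..N}. Del N xs k) *\<^sub>R v m)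
        = (\<Sum>m\<in>{1..N}. (\<Sum>k\<in>{Suc m..N}. Del N xs k) *\<^sub>R v m) + (\<Sum>k\<in>{1..N}. Del N xs k *\<^sub>R v k)"
    proof -
      have "(\<Sum>k\<in>{m..N}. Del N xs k) = Del N xs m + (\<Sum>k\<in>{Suc m..N}. Del N xs k)" if "m \<in> {1..N}" for m
        using that by (simp add: sum.atLeast_Suc_atMost)
      then show ?thesis by (simp add: scaleR_add_left sum.distrib)
    qed
    show ?thesis using s1 s2 s3 by simp
  qed
  finally show ?thesis .
qed

end


lemma three_sq: "(x + y + z)\<^sup>2 \<le> 3 * (x\<^sup>2 + y\<^sup>2 + (z::real)\<^sup>2)"
proof -
  have h: "0 \<le> (x-y)\<^sup>2 + (y-z)\<^sup>2 + (x-z)\<^sup>2" by simp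
  have e: "3 * (x\<^sup>2 + y\<^sup>2 + z\<^sup>2) - (x + y + z)\<^sup>2 = (x-y)\<^sup>2 + (y-z)\<^sup>2 + (x-z)\<^sup>2"
    by (simp add: power2_eq_square algebra_simps)
  show ?thesis using h e by linarith
qed

lemma norm3_sq: "(norm (a + b + d :: 'v::real_normed_vector))\<^sup>2 \<le> 3 * ((norm a)\<^sup>2 + (norm b)\<^sup>2 + (norm d)\<^sup>2)"
proof -
  have "norm (a + b + d) \<le> norm a + norm b + norm d"
    by (metis add_mono norm_triangle_ineq order_trans order_refl)
  then have "(norm (a + b + d))\<^sup>2 \<le> (norm a + norm b + norm d)\<^sup>2" by (intro power_mono) auto
  also have "\<dots> \<le> 3 * ((norm a)\<^sup>2 + (norm b)\<^sup>2 + (norm d)\<^sup>2)" by (rule three_sq)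
  finally show ?thesis .
qed

context setting begin

lemma EA1: "path_expect \<pi>0 Q N (\<lambda>xs. (norm (A1 N xs))\<^sup>2) \<le> real N * (\<bar>\<gamma>\<bar> * real N * Rr)\<^sup>2"
proof -
  define Y where "Y k xs = (real (Suc N - k) * \<gamma>) *\<^sub>R r (xs!(k-1)) (xs!k)" for k xs
  have "path_expect \<pi>0 Q N (\<lambda>xs. (norm (\<Sum>k\<in>{1..N}. Y k xs))\<^sup>2) \<le> real N * (\<bar>\<gamma>\<bar> * real N * Rr)\<^sup>2"
  proof (rule expect_orth[OF Qtrans p0])
    show "dep k (Y k)" for k unfolding dep_def[OF Qtrans p0] Y_def by simp
    show "(\<Sum>y\<in>UNIV. Q$(xs!n)$y *\<^sub>R Y (Suc n) (xs@[y])) = 0" if "length xs = Suc n" for n xs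
    proof -
      have "(\<Sum>y\<in>UNIV. Q$(xs!n)$y *\<^sub>R Y (Suc n) (xs@[y]))
          = (\<Sum>y\<in>UNIV. (real (Suc N - Suc n) * \<gamma>) *\<^sub>R (Q$(xs!n)$y *\<^sub>R r (xs!n) y))"
        unfolding Y_def using that by (intro sum.cong refl) (simp add: nth_append)
      also have "\<dots> = (real (Suc N - Suc n) * \<gamma>) *\<^sub>R (\<Sum>y\<in>UNIV. D (xs!n) y)"
        by (simp add: Q_r scaleR_sum_right)
      finally show ?thesis by (simp add: sumD)
    qed
    show "norm (Y k xs) \<le> \<bar>\<gamma>\<bar> * real N * Rr" if "1 \<le> k" for k xs
    proof -
      have "norm (Y k xs) = real (Suc N - k) * \<bar>\<gamma>\<bar> * norm (r (xs!(k-1)) (xs!k))"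
        by (simp add: Y_def abs_mult)
      also have "\<dots> \<le> real N * \<bar>\<gamma>\<bar> * Rr"
        using that r_bound Rr_nn by (intro mult_mono) auto
      finally show ?thesis by (simp add: mult_ac)
    qed
  qed
  moreover have "(\<Sum>k\<in>{1..N}. Y k xs) = A1 N xs" for xs by (simp add: Y_def A1_def)
  ultimately show ?thesis by simp
qed

lemma Del_bound: "\<bar>Del N xs k\<bar> \<le> 2 * Gb"
proof -
  have a: "\<bar>gg (N - k) (xs ! k)\<bar> \<le> Gb" by (rule gg_bound)
  have b: "\<bar>GG (N - k) (xs ! (k - 1))\<bar> \<le> Gb" by (rule GG_bound)
  show ?thesis unfolding Del_def using a b by arith
qed

lemma Gb_nn: "Gb \<ge> 0" using gg_bound[of 0 undefined] by linarith

lemma EA3: "path_expect \<pi>0 Q N (\<lambda>xs. (norm (A3 N xs))\<^sup>2) \<le> real N * (2 * Gb * (real N * Rr))\<^sup>2"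
proof -
  define Y where "Y k xs = (if k \<le> N then Del N xs k *\<^sub>R score P \<theta> xs (k - 1) else 0)" for k xs
  have "path_expect \<pi>0 Q N (\<lambda>xs. (norm (\<Sum>k\<in>{1..N}. Y k xs))\<^sup>2) \<le> real N * (2 * Gb * (real N * Rr))\<^sup>2"
  proof (rule expect_orth[OF Qtrans p0])
    show "dep k (Y k)" for k unfolding dep_def[OF Qtrans p0] Y_def Del_def
      by (auto simp: score_take)
    show "(\<Sum>y\<in>UNIV. Q$(xs!n)$y *\<^sub>R Y (Suc n) (xs@[y])) = 0" if l: "length xs = Suc n" for n xs
    proof (cases "Suc n \<le> N")
      case True
      have "(\<Sum>y\<in>UNIV. Q$(xs!n)$y *\<^sub>R Y (Suc n) (xs@[y]))
          = (\<Sum>y\<in>UNIV. (Q$(xs!n)$y * gg (N - Suc n) y - Q$(xs!n)$y * GG (N - Suc n) (xs ! n)) *\<^sub>R score P \<theta> xs n)"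
        unfolding Y_def Del_def using True l
        by (intro sum.cong refl) (simp add: nth_append score_snoc right_diff_distrib)
      also have "\<dots> = (act Q (gg (N - Suc n)) (xs ! n) - (\<Sum>y\<in>UNIV. Q$(xs!n)$y) * GG (N - Suc n) (xs ! n)) *\<^sub>R score P \<theta> xs n"
        by (simp add: scaleR_sum_left[symmetric] sum_subtractf act_def sum_distrib_right)
      also have "\<dots> = 0" using Qtrans by (simp add: transition_matrix_def GG_def)
      finally show ?thesis .
    next
      case False
      then show ?thesis by (simp add: Y_def)
    qed
    show "norm (Y k xs) \<le> 2 * Gb * (real N * Rr)" if "1 \<le> k" for k xs
    proof (cases "k \<le> N")
      case True
      have "norm (Y k xs) = \<bar>Del N xs k\<bar> * norm (score P \<theta> xs (k - 1))" using True by (simp add: Y_def)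
      also have "\<dots> \<le> 2 * Gb * (real N * Rr)"
      proof (rule mult_mono)
        have "norm (score P \<theta> xs (k - 1)) \<le> real (k - 1) * Rr" by (rule score_bound)
        also have "\<dots> \<le> real N * Rr" using True Rr_nn by (intro mult_right_mono) auto
        finally show "norm (score P \<theta> xs (k - 1)) \<le> real N * Rr" .
        have "0 \<le> \<bar>Del N xs k\<bar>" by simp
        then show "0 \<le> 2 * Gb" using Del_bound[of N xs k] by linarith
      qed (auto simp: Del_bound)
      finally show ?thesis .
    next
      case False
      have "0 \<le> \<bar>Del N xs k\<bar>" by simp
      then have "0 \<le> 2 * Gb" using Del_bound[of N xs k] by linarith
      then show ?thesis using False Rr_nn by (simp add: Y_def)
    qed
  qed
  moreover have "(\<Sum>k\<in>{1..N}. Y k xs) = A3 N xs" for xs by (simp add: Y_def A3_def)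
  ultimately show ?thesis by simp
qed

lemma A2_bound: "norm (A2 N xs) \<le> real N * (Gb * Rr)"
proof -
  have "norm (A2 N xs) \<le> (\<Sum>m\<in>{1..N}. Gb * Rr)"
    unfolding A2_def
  proof (rule order_trans[OF norm_sum], rule sum_mono)
    fix m
    show "norm (gg (N - m) (xs ! m) *\<^sub>R r (xs ! (m - 1)) (xs ! m)) \<le> Gb * Rr"
      using mult_mono[OF gg_bound r_bound Gb_nn norm_ge_zero] by simp
  qed
  then show ?thesis by simp
qed

definition K2 :: real where "K2 = 3 * ((\<bar>\<gamma>\<bar> * Rr)\<^sup>2 + (Gb * Rr)\<^sup>2 + (2 * Gb * Rr)\<^sup>2)"

lemma ET:
  assumes N: "N \<ge> 1"
  shows "path_expect \<pi>0 Q N (\<lambda>xs. (norm (\<Sum>k\<in>{1..N}. c (xs ! k) *\<^sub>R score P \<theta> xs k))\<^sup>2) \<le> K2 * real N ^ 3"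
proof -
  have "path_expect \<pi>0 Q N (\<lambda>xs. (norm (\<Sum>k\<in>{1..N}. c (xs ! k) *\<^sub>R score P \<theta> xs k))\<^sup>2)
      \<le> path_expect \<pi>0 Q N (\<lambda>xs. 3 * ((norm (A1 N xs))\<^sup>2 + (norm (A2 N xs))\<^sup>2 + (norm (A3 N xs))\<^sup>2))"
    unfolding decomp by (rule expect_mono[OF Qtrans p0]) (rule norm3_sq)
  also have "\<dots> = 3 * (path_expect \<pi>0 Q N (\<lambda>xs. (norm (A1 N xs))\<^sup>2) + path_expect \<pi>0 Q N (\<lambda>xs. (norm (A2 N xs))\<^sup>2)
      + path_expect \<pi>0 Q N (\<lambda>xs. (norm (A3 N xs))\<^sup>2))"
    by (simp add: expect_mult_real expect_add)
  also have "\<dots> \<le> 3 * (real N * (\<bar>\<gamma>\<bar> * real N * Rr)\<^sup>2 + (real N * (Gb * Rr))\<^sup>2 + real N * (2 * Gb * (real N * Rr))\<^sup>2)"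
  proof -
    have "path_expect \<pi>0 Q N (\<lambda>xs. (norm (A2 N xs))\<^sup>2) \<le> (real N * (Gb * Rr))\<^sup>2"
      by (rule expect_bound[OF Qtrans p0]) (intro power_mono A2_bound norm_ge_zero)
    then show ?thesis using EA1[of N] EA3[of N] by simp
  qed
  also have "\<dots> = 3 * (real N ^ 3 * (\<bar>\<gamma>\<bar> * Rr)\<^sup>2 + real N ^ 2 * (Gb * Rr)\<^sup>2 + real N ^ 3 * (2 * Gb * Rr)\<^sup>2)"
    by (simp add: power2_eq_square power3_eq_cube algebra_simps)
  also have "\<dots> \<le> 3 * (real N ^ 3 * (\<bar>\<gamma>\<bar> * Rr)\<^sup>2 + real N ^ 3 * (Gb * Rr)\<^sup>2 + real N ^ 3 * (2 * Gb * Rr)\<^sup>2)"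
  proof -
    have "real N ^ 2 \<le> real N ^ 3" using N by (intro power_increasing) auto
    then show ?thesis by (simp add: mult_right_mono)
  qed
  also have "\<dots> = K2 * real N ^ 3" by (simp add: K2_def algebra_simps)
  finally show ?thesis .
qed

lemma var_le_second:
  "trace_cov \<pi>0 Q N Z \<le> path_expect \<pi>0 Q N (\<lambda>xs. (norm (Z xs))\<^sup>2)"
proof -
  define m where "m = path_expect \<pi>0 Q N Z"
  have "trace_cov \<pi>0 Q N Z = path_expect \<pi>0 Q N (\<lambda>xs. (norm (Z xs))\<^sup>2 - 2 * (m \<bullet> Z xs) + (norm m)\<^sup>2)"
    unfolding trace_cov_def m_def[symmetric]
    by (intro expect_cong) (simp add: power2_norm_eq_inner inner_diff_left inner_diff_right inner_commute)
  also have "\<dots> = path_expect \<pi>0 Q N (\<lambda>xs. (norm (Z xs))\<^sup>2) - 2 * (m \<bullet> m) + (norm m)\<^sup>2"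
    by (simp add: expect_add expect_diff expect_mult_real expect_inner_left expect_const[OF Qtrans p0] m_def)
  also have "\<dots> = path_expect \<pi>0 Q N (\<lambda>xs. (norm (Z xs))\<^sup>2) - (norm m)\<^sup>2"
    by (simp add: power2_norm_eq_inner)
  finally show ?thesis by simp
qed

lemma variance:
  assumes N: "N \<ge> 1"
  shows "trace_cov \<pi>0 Q N (sf_estimator P \<theta> c N) \<le> K2 * real N"
proof -
  have NN: "real N > 0" using N by simp
  have "path_expect \<pi>0 Q N (\<lambda>xs. (norm (sf_estimator P \<theta> c N xs))\<^sup>2)
      = (1 / real N)\<^sup>2 * path_expect \<pi>0 Q N (\<lambda>xs. (norm (\<Sum>k\<in>{1..N}. c (xs ! k) *\<^sub>R score P \<theta> xs k))\<^sup>2)"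
    unfolding expect_mult_real[symmetric] sf_estimator_def
    by (intro expect_cong) (simp add: power_divide)
  also have "\<dots> \<le> (1 / real N)\<^sup>2 * (K2 * real N ^ 3)" by (intro mult_left_mono ET[OF N]) auto
  also have "\<dots> = K2 * real N" using NN by (simp add: power2_eq_square power3_eq_cube)
  finally show ?thesis using var_le_second[of N "sf_estimator P \<theta> c N"] by simp
qed

end

theorem theorem2p3:
  fixes P :: "real^'p \<Rightarrow> real^'x::finite^'x"
    and U :: "(real^'p) set"
    and c :: "'x \<Rightarrow> real"
    and \<pi>0 :: "'x \<Rightarrow> real"
    and \<theta> :: "real^'p"
  assumes "open U"
    and "\<And>t. t \<in> U \<Longrightarrow> transition_matrix (P t)"
    and "\<And>t. t \<in> U \<Longrightarrow> regular (P t)"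
    and "\<And>i j. C1_on (\<lambda>t. P t $ i $ j) U"
    and "\<And>t i j. t \<in> U \<Longrightarrow> P t $ i $ j = 0 \<Longrightarrow> grad (\<lambda>s. P s $ i $ j) t = 0"
    and "prob_dist \<pi>0"
    and "\<theta> \<in> U"
  shows "\<exists>K1 K2. \<forall>N\<ge>1.
      norm (path_expect \<pi>0 (P \<theta>) N (sf_estimator P \<theta> c N)
            - grad (\<lambda>t. \<Sum>x\<in>UNIV. c x * stat_dist (P t) x) \<theta>) \<le> K1 / real N
    \<and> trace_cov \<pi>0 (P \<theta>) N (sf_estimator P \<theta> c N) \<le> K2 * real N"
proof -
  interpret S: setting P U c \<pi>0 \<theta> using assms by unfold_locales
  show ?thesis using S.bias S.variance by blast
qed


end
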